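(* Let $f$ and $g$ be probability densities on a subset $X\subseteq\mathbb{R}^n$. Assume $f$ is measurable and differentiable, vanishes and is differentiable on the boundary $\partial X$, that $\nabla_x f$ is absolutely continuous with respect to $g$, and that the integrals below exist and are finite. Let $\|\cdot\|$ be a norm on $\mathbb{R}^n$ with dual norm $\|\cdot\|_*$, $\alpha\ge1$ and $\alpha^{-1}+\beta^{-1}=1$. Then $$\Big(\int_X\|x\|^{\alpha}g(x)\,\mathrm{d}x\Big)^{1/\alpha}\Big(\int_X\Big\|\frac{\nabla_x f(x)}{g(x)}\Big\|_*^{\beta}g(x)\,\mathrm{d}x\Big)^{1/\beta}\ \ge\ n,$$ with equality if $\nabla_x f(x)=-K\,g(x)\|x\|^{\alpha-1}\nabla_x\|x\|$ for some $K>0$; when the dual norm is strictly convex, equality holds only in this case.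
   Context: The dual norm is $\|Y\|_*=\sup_{\|X\|\le1}X\cdot Y$. $\nabla_x\|x\|$ denotes the gradient of the norm at $x$. A norm is strictly convex if its unit ball is strictly convex. *)

theory Defs
  imports "HOL-Analysis.Analysis"
begin

definition is_norm :: "(real^'n \<Rightarrow> real) \<Rightarrow> bool" where
  "is_norm N \<longleftrightarrow> (\<forall>x. 0 \<le> N x) \<and> (\<forall>x. N x = 0 \<longleftrightarrow> x = 0)
     \<and> (\<forall>c x. N (c *\<^sub>R x) = \<bar>c\<bar> * N x) \<and> (\<forall>x y. N (x + y) \<le> N x + N y)"

definition dual_norm :: "(real^'n \<Rightarrow> real) \<Rightarrow> real^'n \<Rightarrow> real" where
  "dual_norm N y = (SUP x\<in>{x. N x \<le> 1}. x \<bullet> y)"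

definition strictly_convex_set :: "'a::real_normed_vector set \<Rightarrow> bool" where
  "strictly_convex_set S \<longleftrightarrow> (\<forall>x\<in>S. \<forall>y\<in>S. x \<noteq> y \<longrightarrow>
      (\<forall>t. 0 < t \<and> t < 1 \<longrightarrow> (1 - t) *\<^sub>R x + t *\<^sub>R y \<in> interior S))"

definition strictly_convex_norm :: "(real^'n \<Rightarrow> real) \<Rightarrow> bool" where
  "strictly_convex_norm N \<longleftrightarrow> strictly_convex_set {x. N x \<le> 1}"

definition has_grad :: "(real^'n \<Rightarrow> real) \<Rightarrow> real^'n \<Rightarrow> real^'n \<Rightarrow> bool" where
  "has_grad h v x \<longleftrightarrow> (h has_derivative (\<lambda>u. v \<bullet> u)) (at x)"

text \<open>Essential supremum of D on X w.r.t. the measure g(x) dx.\<close>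
definition ess_sup_wrt :: "(real^'n) set \<Rightarrow> (real^'n \<Rightarrow> real) \<Rightarrow> (real^'n \<Rightarrow> real) \<Rightarrow> real" where
  "ess_sup_wrt X g D = Inf {c. AE x in lebesgue. x \<in> X \<and> 0 < g x \<longrightarrow> D x \<le> c}"

text \<open>The weighted L^beta quantity with beta the Hoelder conjugate of alpha
  (beta = infinity, i.e. essential supremum, when alpha = 1).\<close>
definition conj_moment :: "real \<Rightarrow> (real^'n) set \<Rightarrow> (real^'n \<Rightarrow> real) \<Rightarrow> (real^'n \<Rightarrow> real) \<Rightarrow> real" where
  "conj_moment \<alpha> X g D =
     (if \<alpha> = 1 then ess_sup_wrt X g D
      else (\<integral>x\<in>X. D x powr (\<alpha> / (\<alpha> - 1)) * g x \<partial>lebesgue) powr ((\<alpha> - 1) / \<alpha>))"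

end

theory Submission
  imports Defs "HOL-Analysis.Analysis"
begin


context
  fixes N :: "real^'n \<Rightarrow> real"
  assumes isn: "is_norm N"
begin

lemma nN: "0 \<le> N x" and zN: "N x = 0 \<longleftrightarrow> x = 0" and sN: "N (c *\<^sub>R x) = \<bar>c\<bar> * N x"
  and tN: "N (x + y) \<le> N x + N y"
  using isn unfolding is_norm_def by auto

lemma N0[simp]: "N 0 = 0" using zN by simp

lemma negN[simp]: "N (- x) = N x"
  using sN[of "-1" x] by simp

lemma diffN: "N x - N y \<le> N (x - y)"
  using tN[of "x - y" y] by simp

lemma absdiffN: "\<bar>N x - N y\<bar> \<le> N (x - y)"
  using diffN[of x y] diffN[of y x] negN[of "x - y"] by (simp add: abs_le_iff)

lemma sumN: "N (sum f S) \<le> (\<Sum>i\<in>S. N (f i))"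
proof (cases "finite S")
  case True then show ?thesis
    by (induction S rule: finite_induct) (auto intro: order_trans[OF tN])
qed simp

lemma upperN: "\<exists>C>0. \<forall>x. N x \<le> C * norm x"
proof -
  let ?C = "1 + (\<Sum>b\<in>Basis. N (b::real^'n))"
  have "N x \<le> ?C * norm x" for x
  proof -
    have "N x = N (\<Sum>b\<in>Basis. (x \<bullet> b) *\<^sub>R b)" by (simp add: euclidean_representation)
    also have "\<dots> \<le> (\<Sum>b\<in>Basis. N ((x \<bullet> b) *\<^sub>R b))" by (rule sumN)
    also have "\<dots> = (\<Sum>b\<in>Basis. \<bar>x \<bullet> b\<bar> * N b)" by (simp add: sN)
    also have "\<dots> \<le> (\<Sum>b\<in>Basis. norm x * N b)"
      by (intro sum_mono mult_right_mono) (auto simp: Basis_le_norm nN)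
    also have "\<dots> = norm x * (\<Sum>b\<in>Basis. N b)" by (simp add: sum_distrib_left)
    also have "\<dots> \<le> ?C * norm x" by (simp add: algebra_simps)
    finally show ?thesis .
  qed
  moreover have "?C > 0" using sum_nonneg[of Basis "\<lambda>b. N b"] nN by (smt (verit))
  ultimately show ?thesis by blast
qed

lemma contN: "continuous_on S N"
proof -
  obtain C where C: "C > 0" "\<And>x. N x \<le> C * norm x" using upperN by blast
  show ?thesis unfolding continuous_on_iff
  proof (intro ballI allI impI)
    fix x e assume "0 < (e::real)"
    then show "\<exists>d>0. \<forall>x'\<in>S. dist x' x < d \<longrightarrow> dist (N x') (N x) < e"
    proof (intro exI[of _ "e / C"] conjI ballI impI)
      fix x' assume "dist x' x < e / C"
      then have "C * norm (x' - x) < e" using C by (simp add: dist_norm field_simps)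
      then show "dist (N x') (N x) < e"
        using absdiffN[of x' x] C(2)[of "x' - x"] by (simp add: dist_real_def)
    qed (use C \<open>0 < e\<close> in auto)
  qed
qed

lemma lowerN: "\<exists>c>0. \<forall>x. c * norm x \<le> N x"
proof -
  have "compact (sphere (0::real^'n) 1)" by simp
  moreover have "sphere (0::real^'n) 1 \<noteq> {}" by simp
  ultimately obtain z where z: "z \<in> sphere 0 1" "\<And>y. y \<in> sphere 0 1 \<Longrightarrow> N z \<le> N y"
    using continuous_attains_inf[OF _ _ contN] by metis
  have "z \<noteq> 0" using z by auto
  then have pos: "N z > 0" using nN zN by (metis less_eq_real_def)
  have "N z * norm x \<le> N x" for x
  proof (cases "x = 0")
    case False
    then have "N z \<le> N ((1 / norm x) *\<^sub>R x)" by (intro z(2)) auto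
    then show ?thesis using False by (simp add: sN field_simps)
  qed simp
  with pos show ?thesis by (metis mult.commute)
qed

lemma bdd_dual: "bdd_above ((\<lambda>x. x \<bullet> y) ` {x. N x \<le> 1})"
proof -
  obtain c where c: "c > 0" "\<And>x. c * norm x \<le> N x" using lowerN by blast
  have "x \<bullet> y \<le> norm y / c" if "N x \<le> 1" for x
  proof -
    have "norm x \<le> 1 / c" using c(2)[of x] that c(1) by (simp add: field_simps)
    then have "x \<bullet> y \<le> (1/c) * norm y"
      by (meson Cauchy_Schwarz_ineq2 abs_le_D1 mult_right_mono norm_ge_zero order_trans)
    then show ?thesis by simp
  qed
  then show ?thesis by (auto simp: bdd_above_def)
qed

lemma dual_ge: "N x \<le> 1 \<Longrightarrow> x \<bullet> y \<le> dual_norm N y"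
  unfolding dual_norm_def by (rule cSUP_upper[OF _ bdd_dual]) auto

lemma dual_nonneg: "0 \<le> dual_norm N y"
  using dual_ge[of 0 y] by simp

lemma dual_le: "(\<And>x. N x \<le> 1 \<Longrightarrow> x \<bullet> y \<le> M) \<Longrightarrow> dual_norm N y \<le> M"
  unfolding dual_norm_def by (rule cSUP_least) (auto intro!: exI[of _ 0])

lemma inner_le_dual: "x \<bullet> y \<le> N x * dual_norm N y"
proof (cases "x = 0")
  case True then show ?thesis by simp
next
  case False
  then have pos: "N x > 0" using nN zN by (metis less_eq_real_def)
  have "((1 / N x) *\<^sub>R x) \<bullet> y \<le> dual_norm N y"
    by (rule dual_ge) (use pos in \<open>simp add: sN\<close>)
  then show ?thesis using pos by (simp add: field_simps)
qed

lemma abs_inner_le_dual: "\<bar>x \<bullet> y\<bar> \<le> N x * dual_norm N y"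
  using inner_le_dual[of x y] inner_le_dual[of "-x" y] by simp

lemma dual_tri: "dual_norm N (y + z) \<le> dual_norm N y + dual_norm N z"
  by (rule dual_le) (auto simp: inner_add_right intro: add_mono dual_ge)

lemma dual_scale: "dual_norm N (c *\<^sub>R y) = \<bar>c\<bar> * dual_norm N y"
proof (rule antisym)
  show "dual_norm N (c *\<^sub>R y) \<le> \<bar>c\<bar> * dual_norm N y"
  proof (rule dual_le)
    fix x assume "N x \<le> 1"
    have "x \<bullet> (c *\<^sub>R y) = c * (x \<bullet> y)" by simp
    also have "\<dots> \<le> \<bar>c\<bar> * \<bar>x \<bullet> y\<bar>" by (simp add: abs_mult[symmetric])
    also have "\<dots> \<le> \<bar>c\<bar> * dual_norm N y"
      using abs_inner_le_dual[of x y] \<open>N x \<le> 1\<close> dual_nonneg[of y]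
      by (intro mult_left_mono) (auto intro: order_trans mult_left_le_one_le nN mult_right_mono[of "N x" 1 "dual_norm N y", simplified])
    finally show "x \<bullet> (c *\<^sub>R y) \<le> \<bar>c\<bar> * dual_norm N y" .
  qed
next
  show "\<bar>c\<bar> * dual_norm N y \<le> dual_norm N (c *\<^sub>R y)"
  proof (cases "c = 0")
    case False
    have "dual_norm N y \<le> dual_norm N (c *\<^sub>R y) / \<bar>c\<bar>"
    proof (rule dual_le)
      fix x assume "N x \<le> 1"
      have "x \<bullet> y = (sgn c *\<^sub>R x) \<bullet> (c *\<^sub>R y) / \<bar>c\<bar>" using False
        by (simp add: sgn_if)
      also have "\<dots> \<le> dual_norm N (c *\<^sub>R y) / \<bar>c\<bar>"
        by (intro divide_right_mono dual_ge) (use \<open>N x \<le> 1\<close> False in \<open>auto simp: sN sgn_if\<close>)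
      finally show "x \<bullet> y \<le> dual_norm N (c *\<^sub>R y) / \<bar>c\<bar>" .
    qed
    then show ?thesis using False by (simp add: field_simps)
  qed (simp add: dual_nonneg)
qed

lemma dual_neg[simp]: "dual_norm N (- y) = dual_norm N y"
  using dual_scale[of "-1" y] by simp

lemma dual_upper: "\<exists>C>0. \<forall>y. dual_norm N y \<le> C * norm y"
proof -
  obtain c where c: "c > 0" "\<And>x. c * norm x \<le> N x" using lowerN by blast
  have "dual_norm N y \<le> (1/c) * norm y" for y
  proof (rule dual_le)
    fix x assume "N x \<le> 1"
    have "norm x \<le> 1 / c" using c(2)[of x] \<open>N x \<le> 1\<close> c(1) by (simp add: field_simps)
    then show "x \<bullet> y \<le> (1/c) * norm y"
      by (meson Cauchy_Schwarz_ineq2 abs_le_D1 mult_right_mono norm_ge_zero order_trans)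
  qed
  then show ?thesis using c(1) by (intro exI[of _ "1/c"]) auto
qed

lemma cont_dual: "continuous_on S (dual_norm N)"
proof -
  obtain C where C: "C > 0" "\<And>y. dual_norm N y \<le> C * norm y" using dual_upper by blast
  have ad: "\<bar>dual_norm N y - dual_norm N z\<bar> \<le> dual_norm N (y - z)" for y z
    using dual_tri[of "y - z" z] dual_tri[of "z - y" y] dual_neg[of "y - z"] by (simp add: abs_le_iff)
  show ?thesis unfolding continuous_on_iff
  proof (intro ballI allI impI)
    fix x e assume "0 < (e::real)"
    then show "\<exists>d>0. \<forall>x'\<in>S. dist x' x < d \<longrightarrow> dist (dual_norm N x') (dual_norm N x) < e"
    proof (intro exI[of _ "e / C"] conjI ballI impI)
      fix x' assume "dist x' x < e / C"
      then have "C * norm (x' - x) < e" using C by (simp add: dist_norm field_simps)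
      then show "dist (dual_norm N x') (dual_norm N x) < e"
        using ad[of x' x] C(2)[of "x' - x"] by (simp add: dist_real_def)
    qed (use C \<open>0 < e\<close> in auto)
  qed
qed

end


lemma deriv_quot_bound:
  fixes \<phi> :: "real \<Rightarrow> real"
  assumes d: "(\<phi> has_field_derivative d) (at 0)"
    and b: "\<And>t. 0 < t \<Longrightarrow> t < 1 \<Longrightarrow> (\<phi> t - \<phi> 0) / t \<le> M"
  shows "d \<le> M"
proof -
  have "((\<lambda>t. (\<phi> t - \<phi> 0) / (t - 0)) \<longlongrightarrow> d) (at 0 within {0<..})"
    using d has_field_derivative_iff has_field_derivative_at_within by blast
  then have l: "((\<lambda>t. (\<phi> t - \<phi> 0) / t) \<longlongrightarrow> d) (at_right 0)" by simp
  have "eventually (\<lambda>t. (\<phi> t - \<phi> 0) / t \<le> M) (at_right (0::real))"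
    unfolding eventually_at_right_field using b by (intro exI[of _ 1]) auto
  then show ?thesis using tendsto_upperbound[OF l] by simp
qed

lemma deriv_quot_eq:
  fixes \<phi> :: "real \<Rightarrow> real"
  assumes d: "(\<phi> has_field_derivative d) (at 0)"
    and b: "\<And>t. 0 < t \<Longrightarrow> t < 1 \<Longrightarrow> (\<phi> t - \<phi> 0) / t = M"
  shows "d = M"
proof -
  have "((\<lambda>t. (\<phi> t - \<phi> 0) / (t - 0)) \<longlongrightarrow> d) (at 0 within {0<..})"
    using d has_field_derivative_iff has_field_derivative_at_within by blast
  then have l: "((\<lambda>t. (\<phi> t - \<phi> 0) / t) \<longlongrightarrow> d) (at_right 0)" by simp
  have "eventually (\<lambda>t. (\<phi> t - \<phi> 0) / t = M) (at_right (0::real))"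
    unfolding eventually_at_right_field using b by (intro exI[of _ 1]) auto
  then have "((\<lambda>t. (\<phi> t - \<phi> 0) / t) \<longlongrightarrow> M) (at_right 0)"
    using tendsto_eventually by (simp add: tendsto_const tendsto_cong)
  then show ?thesis using l tendsto_unique by (metis trivial_limit_at_right_real)
qed

lemma dir_deriv:
  fixes N :: "real^'n \<Rightarrow> real"
  assumes "has_grad N v x"
  shows "((\<lambda>t. N (x + t *\<^sub>R u)) has_field_derivative (v \<bullet> u)) (at 0)"
proof -
  have 1: "((\<lambda>t. x + t *\<^sub>R u) has_derivative (\<lambda>t. t *\<^sub>R u)) (at (0::real))"
    by (auto intro!: derivative_eq_intros)
  have 2: "(N has_derivative (\<lambda>h. v \<bullet> h)) (at (x + (0::real) *\<^sub>R u))"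
    using assms by (simp add: has_grad_def)
  have "((\<lambda>t. N (x + t *\<^sub>R u)) has_derivative (\<lambda>t. v \<bullet> (t *\<^sub>R u))) (at 0)"
    using has_derivative_compose[OF 1 2] by simp
  moreover have "(\<lambda>t. v \<bullet> (t *\<^sub>R u)) = (*) (v \<bullet> u)" by (auto simp: mult.commute)
  ultimately show ?thesis by (simp add: has_field_derivative_def)
qed

context
  fixes N :: "real^'n \<Rightarrow> real"
  assumes isn: "is_norm N"
begin

lemma grad_N:
  assumes g: "has_grad N v x" and x: "x \<noteq> 0"
  shows "v \<bullet> x = N x" "\<And>u. v \<bullet> u \<le> N u" "dual_norm N v = 1"
proof -
  show vu: "v \<bullet> u \<le> N u" for u
  proof (rule deriv_quot_bound[OF dir_deriv[OF g]])
    fix t :: real assume "0 < t" "t < 1"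
    have "N (x + t *\<^sub>R u) \<le> N x + t * N u" using tN[OF isn] sN[OF isn] \<open>0 < t\<close>
      by (metis abs_of_pos)
    then show "(N (x + t *\<^sub>R u) - N (x + 0 *\<^sub>R u)) / t \<le> N u"
      using \<open>0 < t\<close> by (simp add: field_simps)
  qed
  show vx: "v \<bullet> x = N x"
  proof (rule deriv_quot_eq[OF dir_deriv[OF g]])
    fix t :: real assume "0 < t" "t < 1"
    have "N (x + t *\<^sub>R x) = (1 + t) * N x"
      using sN[OF isn, of "1 + t" x] \<open>0 < t\<close> by (simp add: algebra_simps)
    then show "(N (x + t *\<^sub>R x) - N (x + 0 *\<^sub>R x)) / t = N x"
      using \<open>0 < t\<close> by (simp add: field_simps)
  qed
  have pos: "N x > 0" using nN[OF isn] zN[OF isn] x by (metis less_eq_real_def)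
  show "dual_norm N v = 1"
  proof (rule antisym)
    show "dual_norm N v \<le> 1" by (rule dual_le[OF isn]) (use vu in \<open>auto simp: inner_commute intro: order_trans\<close>)
    have "((1 / N x) *\<^sub>R x) \<bullet> v \<le> dual_norm N v"
      by (rule dual_ge[OF isn]) (use pos in \<open>simp add: sN[OF isn]\<close>)
    then show "1 \<le> dual_norm N v" using pos vx by (simp add: inner_commute)
  qed
qed

lemma dual_le1_iff: "dual_norm N z \<le> 1 \<longleftrightarrow> (\<forall>u. z \<bullet> u \<le> N u)"
proof
  assume "dual_norm N z \<le> 1"
  then show "\<forall>u. z \<bullet> u \<le> N u"
    using inner_le_dual[OF isn] nN[OF isn]
    by (metis inner_commute mult_left_le order_trans)
next
  assume "\<forall>u. z \<bullet> u \<le> N u"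
  then show "dual_norm N z \<le> 1"
    by (intro dual_le[OF isn]) (auto simp: inner_commute intro: order_trans)
qed

lemma norming:
  "\<exists>z. z \<bullet> y = N y \<and> (\<forall>u. z \<bullet> u \<le> N u)"
proof (cases "y = 0")
  case True then show ?thesis by (intro exI[of _ 0]) (simp add: nN[OF isn] N0[OF isn])
next
  case False
  then have pos: "N y > 0" using nN[OF isn] zN[OF isn] by (metis less_eq_real_def)
  define y0 where "y0 = (1 / N y) *\<^sub>R y"
  have Ny0: "N y0 = 1" using pos by (simp add: y0_def sN[OF isn])
  have cvx: "convex {u. N u < 1}"
    unfolding convex_def
  proof (intro ballI allI impI, simp)
    fix u w and s t :: real
    assume "N u < 1" "N w < 1" "0 \<le> s" "0 \<le> t" "s + t = 1"
    have "N (s *\<^sub>R u + t *\<^sub>R w) \<le> s * N u + t * N w"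
      using tN[OF isn] sN[OF isn] \<open>0 \<le> s\<close> \<open>0 \<le> t\<close> by (metis abs_of_nonneg)
    also have "\<dots> < 1"
    proof (cases "s = 0")
      case True then show ?thesis using \<open>s + t = 1\<close> \<open>N w < 1\<close> by simp
    next
      case False
      then have "s * N u < s" using \<open>N u < 1\<close> \<open>0 \<le> s\<close> by simp
      moreover have "t * N w \<le> t" using \<open>N w < 1\<close> \<open>0 \<le> t\<close> by (simp add: mult_left_le)
      ultimately show ?thesis using \<open>s + t = 1\<close> by linarith
    qed
    finally show "N (s *\<^sub>R u + t *\<^sub>R w) < 1" .
  qed
  obtain a b where ab: "a \<noteq> 0" "\<forall>u\<in>{u. N u < 1}. a \<bullet> u \<le> b" "\<forall>u\<in>{y0}. a \<bullet> u \<ge> b"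
    using separating_hyperplane_sets[OF cvx convex_singleton, of y0] Ny0 by force
  have key: "s * (a \<bullet> u) \<le> b * N u" if "0 < s" "s < 1" for s u
  proof (cases "u = 0")
    case False
    then have "N u > 0" using nN[OF isn] zN[OF isn] by (metis less_eq_real_def)
    have "N ((s / N u) *\<^sub>R u) = s" using \<open>N u > 0\<close> that by (simp add: sN[OF isn])
    then have "a \<bullet> ((s / N u) *\<^sub>R u) \<le> b" using ab(2) that(2) by (metis (mono_tags) mem_Collect_eq)
    then show ?thesis using \<open>N u > 0\<close> by (simp add: field_simps)
  qed (use ab(2) in \<open>auto simp: nN[OF isn] N0[OF isn]\<close>)
  have b0: "b > 0"
  proof (rule ccontr)
    assume "\<not> b > 0"
    then have "b \<le> 0" by simp
    have "(1/2) * (a \<bullet> a) \<le> b * N a" by (rule key) auto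
    also have "\<dots> \<le> 0" using \<open>b \<le> 0\<close> nN[OF isn, of a] by (simp add: mult_nonpos_nonneg)
    finally have "a \<bullet> a \<le> 0" by simp
    then show False using ab(1) by (metis inner_gt_zero_iff not_le)
  qed
  have all: "a \<bullet> u \<le> b * N u" for u
  proof (rule ccontr)
    assume "\<not> ?thesis"
    then have gt: "a \<bullet> u > b * N u" by simp
    then have "a \<bullet> u > 0" using b0 nN[OF isn, of u] by (smt (verit) mult_nonneg_nonneg)
    define s where "s = (1 + b * N u / (a \<bullet> u)) / 2"
    have "b * N u / (a \<bullet> u) < 1" using gt \<open>a \<bullet> u > 0\<close> by (simp add: field_simps)
    moreover have "0 \<le> b * N u / (a \<bullet> u)" using b0 nN[OF isn, of u] \<open>a \<bullet> u > 0\<close> by simp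
    ultimately have s: "0 < s" "s < 1" by (auto simp: s_def)
    have "s * (a \<bullet> u) = (a \<bullet> u + b * N u) / 2" using \<open>a \<bullet> u > 0\<close>
      by (simp add: s_def field_simps)
    also have "\<dots> > b * N u" using gt by simp
    finally show False using key[OF s, of u] by simp
  qed
  define z where "z = (1 / b) *\<^sub>R a"
  have zu: "z \<bullet> u \<le> N u" for u using all[of u] b0 by (simp add: z_def field_simps)
  have "a \<bullet> y0 \<ge> b" using ab(3) by simp
  then have "z \<bullet> y \<ge> N y" using b0 pos by (simp add: z_def y0_def field_simps)
  with zu[of y] have "z \<bullet> y = N y" by simp
  with zu show ?thesis by blast
qed

lemma face_unique:
  assumes sc: "strictly_convex_norm (dual_norm N)" and x: "x \<noteq> 0"
    and z1: "z1 \<bullet> x = N x" "\<forall>u. z1 \<bullet> u \<le> N u"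
    and z2: "z2 \<bullet> x = N x" "\<forall>u. z2 \<bullet> u \<le> N u"
  shows "z1 = z2"
proof (rule ccontr)
  assume ne: "z1 \<noteq> z2"
  have "z1 \<in> {z. dual_norm N z \<le> 1}" "z2 \<in> {z. dual_norm N z \<le> 1}"
    using z1 z2 dual_le1_iff by auto
  then have H: "\<And>t. 0 < t \<Longrightarrow> t < 1 \<Longrightarrow> (1 - t) *\<^sub>R z1 + t *\<^sub>R z2 \<in> interior {z. dual_norm N z \<le> 1}"
    using sc ne unfolding strictly_convex_norm_def strictly_convex_set_def by blast
  have "(1 - 1/2) *\<^sub>R z1 + (1/2) *\<^sub>R z2 \<in> interior {z. dual_norm N z \<le> 1}"
    by (rule H[of "1/2"]) auto
  then obtain e where e: "e > 0" "ball ((1 - 1/2) *\<^sub>R z1 + (1/2) *\<^sub>R z2) e \<subseteq> {z. dual_norm N z \<le> 1}"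
    using mem_interior by blast
  define m where "m = (1 - 1/2) *\<^sub>R z1 + (1/2) *\<^sub>R z2"
  define m' where "m' = m + (e / 2 / norm x) *\<^sub>R x"
  have "dist m m' < e" using e x by (simp add: m'_def dist_norm)
  then have "dual_norm N m' \<le> 1" using e(2) by (auto simp: m_def)
  then have "m' \<bullet> x \<le> N x" using dual_le1_iff by auto
  moreover have "m \<bullet> x = N x" using z1 z2 by (simp add: m_def inner_add_left)
  moreover have "(e / 2 / norm x) *\<^sub>R x \<bullet> x = e / 2 * norm x" using x
    by (simp add: power2_norm_eq_inner[symmetric] power2_eq_square)
  ultimately have "m' \<bullet> x = N x + e / 2 * norm x" by (simp add: m'_def inner_add_left)
  moreover have "e / 2 * norm x > 0" using e x by simp
  ultimately show False using \<open>m' \<bullet> x \<le> N x\<close> by linarith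
qed

lemma dual_le1_norm_bound: "\<exists>C. \<forall>z. (\<forall>u. z \<bullet> u \<le> N u) \<longrightarrow> norm z \<le> C"
proof -
  obtain C where C: "C > 0" "\<And>x. N x \<le> C * norm x" using upperN[OF isn] by blast
  have "norm z \<le> C" if "\<forall>u. z \<bullet> u \<le> N u" for z
  proof (cases "z = 0")
    case False
    have "z \<bullet> z \<le> C * norm z" using that C(2)[of z] by (metis order_trans)
    then have "norm z * norm z \<le> C * norm z" by (simp add: power2_norm_eq_inner[symmetric] power2_eq_square)
    then show ?thesis using False by simp
  qed (use C in auto)
  then show ?thesis by blast
qed

lemma smooth_from_sc:
  assumes sc: "strictly_convex_norm (dual_norm N)" and x: "x \<noteq> 0"
    and w: "w \<bullet> x = N x" "\<forall>u. w \<bullet> u \<le> N u"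
  shows "has_grad N w x"
proof -
  obtain C where C: "\<And>z. (\<forall>u. z \<bullet> u \<le> N u) \<Longrightarrow> norm z \<le> C" using dual_le1_norm_bound by blast
  have close: "\<exists>d>0. \<forall>y z. norm (y - x) < d \<longrightarrow> z \<bullet> y = N y \<longrightarrow> (\<forall>u. z \<bullet> u \<le> N u) \<longrightarrow> norm (z - w) \<le> e"
    if e: "e > 0" for e
  proof (rule ccontr)
    assume "\<not> ?thesis"
    then have "\<forall>k::nat. \<exists>y z. norm (y - x) < 1 / (Suc k) \<and> z \<bullet> y = N y \<and> (\<forall>u. z \<bullet> u \<le> N u) \<and> norm (z - w) > e"
      by (auto simp: not_le)
    then obtain y z where yz: "\<And>k. norm (y k - x) < 1 / (Suc k)" "\<And>k. z k \<bullet> y k = N (y k)"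
      "\<And>k. \<forall>u. z k \<bullet> u \<le> N u" "\<And>k. norm (z k - w) > e"
      by metis
    have "\<forall>k. z k \<in> cball 0 C" using C yz(3) by auto
    then obtain l r where lr: "strict_mono (r :: nat \<Rightarrow> nat)" "(z \<circ> r) \<longlonglongrightarrow> l"
      using seq_compactE[OF compact_imp_seq_compact[OF compact_cball]] by metis
    have yx: "y \<longlonglongrightarrow> x"
    proof (rule LIMSEQ_I)
      fix r :: real assume "r > 0"
      then obtain k0 :: nat where "1 / Suc k0 < r" by (meson nat_approx_posE)
      show "\<exists>no. \<forall>n\<ge>no. norm (y n - x) < r"
      proof (intro exI allI impI)
        fix n assume "k0 \<le> n"
        then have "1 / real (Suc n) \<le> 1 / Suc k0" by (simp add: frac_le)
        then show "norm (y n - x) < r" using yz(1)[of n] \<open>1 / Suc k0 < r\<close> by linarith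
      qed
    qed
    then have yr: "(y \<circ> r) \<longlonglongrightarrow> x" using lr(1) LIMSEQ_subseq_LIMSEQ by blast
    have lu: "l \<bullet> u \<le> N u" for u
    proof -
      have "((\<lambda>k. (z \<circ> r) k \<bullet> u) \<longlonglongrightarrow> l \<bullet> u)" by (intro tendsto_intros lr(2))
      then show ?thesis using yz(3) by (intro tendsto_upperbound) (auto simp: o_def)
    qed
    have "((\<lambda>k. (z \<circ> r) k \<bullet> (y \<circ> r) k) \<longlonglongrightarrow> l \<bullet> x)" by (intro tendsto_intros lr(2) yr)
    moreover have "((\<lambda>k. (z \<circ> r) k \<bullet> (y \<circ> r) k) \<longlonglongrightarrow> N x)"
    proof -
      have "((\<lambda>k. N ((y \<circ> r) k)) \<longlonglongrightarrow> N x)"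
      proof -
        have "isCont N x" using contN[OF isn, of UNIV] by (simp add: continuous_on_eq_continuous_at)
        then show ?thesis using isCont_tendsto_compose[OF _ yr] by (simp add: o_def)
      qed
      then show ?thesis using yz(2) by (simp add: o_def)
    qed
    ultimately have lx: "l \<bullet> x = N x" using LIMSEQ_unique by blast
    have "l = w" using face_unique[OF sc x] lx lu w by blast
    then have "((\<lambda>k. norm ((z \<circ> r) k - w)) \<longlonglongrightarrow> 0)"
      using lr(2) by (metis Lim_null tendsto_norm_zero_iff)
    then have "eventually (\<lambda>k. norm ((z \<circ> r) k - w) < e) sequentially"
      using e by (simp add: order_tendstoD(2))
    then show False using yz(4) by (auto simp: o_def eventually_sequentially not_less[symmetric] dest: less_asym)
  qed
  have bl: "bounded_linear (\<lambda>h. w \<bullet> h)" by (simp add: bounded_linear_inner_right)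
  show ?thesis
    unfolding has_grad_def has_derivative_at_alt
  proof (intro conjI bl allI impI)
    fix e :: real assume "e > 0"
    obtain d where d: "d > 0" "\<And>y z. norm (y - x) < d \<Longrightarrow> z \<bullet> y = N y \<Longrightarrow> (\<forall>u. z \<bullet> u \<le> N u) \<Longrightarrow> norm (z - w) \<le> e"
      using close[OF \<open>e > 0\<close>] by blast
    show "\<exists>d>0. \<forall>y. norm (y - x) < d \<longrightarrow> norm (N y - N x - w \<bullet> (y - x)) \<le> e * norm (y - x)"
    proof (intro exI[of _ d] conjI allI impI d(1))
      fix y assume yd: "norm (y - x) < d"
      obtain z where z: "z \<bullet> y = N y" "\<forall>u. z \<bullet> u \<le> N u" using norming by blast
      have lo: "0 \<le> N y - N x - w \<bullet> (y - x)" using w(1) w(2)[rule_format, of y] by (simp add: inner_diff_right)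
      have "N y - N x - w \<bullet> (y - x) \<le> (z - w) \<bullet> (y - x)"
        using z z(2)[rule_format, of x] by (simp add: inner_diff_right inner_diff_left)
      also have "\<dots> \<le> norm (z - w) * norm (y - x)" by (rule norm_cauchy_schwarz)
      also have "\<dots> \<le> e * norm (y - x)" using d(2)[OF yd z] by (simp add: mult_right_mono)
      finally show "norm (N y - N x - w \<bullet> (y - x)) \<le> e * norm (y - x)" using lo by simp
    qed
  qed
qed

end


lemma scale_integral:
  fixes u :: "real^'n \<Rightarrow> real" and c :: real
  assumes c: "c > 0" and u[measurable]: "u \<in> borel_measurable borel"
  shows "integrable lborel (\<lambda>x. u (c *\<^sub>R x)) \<longleftrightarrow> integrable lborel u"
    and "(\<integral>x. u (c *\<^sub>R x) \<partial>lborel) = (\<integral>x. u x \<partial>lborel) / c ^ CARD('n)"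
proof -
  have L: "(lborel::(real^'n) measure) = density (distr lborel borel (\<lambda>x::real^'n. 0 + c *\<^sub>R x)) (\<lambda>_. \<bar>c\<bar> ^ DIM(real^'n))"
    using lborel_affine[of c "0::real^'n"] c by simp
  have m: "(\<lambda>x::real^'n. 0 + c *\<^sub>R x) \<in> lborel \<rightarrow>\<^sub>M borel" by simp
  have "integrable lborel u \<longleftrightarrow> integrable (density (distr lborel borel (\<lambda>x. 0 + c *\<^sub>R x)) (\<lambda>_. ennreal (c ^ CARD('n)))) u"
    using L c by simp
  also have "\<dots> \<longleftrightarrow> integrable (distr lborel borel (\<lambda>x. 0 + c *\<^sub>R x)) (\<lambda>x. c ^ CARD('n) *\<^sub>R u x)"
    using c by (intro integrable_density) auto
  also have "\<dots> \<longleftrightarrow> integrable lborel (\<lambda>x. c ^ CARD('n) *\<^sub>R u (0 + c *\<^sub>R x))"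
    by (intro integrable_distr_eq m) simp
  also have "\<dots> \<longleftrightarrow> integrable lborel (\<lambda>x. u (c *\<^sub>R x))"
    using c by simp
  finally show "integrable lborel (\<lambda>x. u (c *\<^sub>R x)) \<longleftrightarrow> integrable lborel u" ..
  have "(\<integral>x. u x \<partial>lborel) = (\<integral>x. u x \<partial>density (distr lborel borel (\<lambda>x. 0 + c *\<^sub>R x)) (\<lambda>_. ennreal (c ^ CARD('n))))"
    using L c by simp
  also have "\<dots> = (\<integral>x. c ^ CARD('n) *\<^sub>R u x \<partial>distr lborel borel (\<lambda>x. 0 + c *\<^sub>R x))"
    using c by (intro integral_density) auto
  also have "\<dots> = (\<integral>x. c ^ CARD('n) *\<^sub>R u (0 + c *\<^sub>R x) \<partial>lborel)"
    by (intro integral_distr m) simp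
  also have "\<dots> = c ^ CARD('n) * (\<integral>x. u (c *\<^sub>R x) \<partial>lborel)" by simp
  finally show "(\<integral>x. u (c *\<^sub>R x) \<partial>lborel) = (\<integral>x. u x \<partial>lborel) / c ^ CARD('n)"
    using c by (simp add: field_simps)
qed

lemma FTC_lborel:
  fixes \<phi> \<phi>' :: "real \<Rightarrow> real"
  assumes ab: "a \<le> b"
    and d: "\<And>s. a \<le> s \<Longrightarrow> s \<le> b \<Longrightarrow> (\<phi> has_vector_derivative \<phi>' s) (at s)"
    and int: "integrable lborel (\<lambda>s. indicator {a..b} s * \<phi>' s)"
  shows "(\<integral>s. indicator {a..b} s * \<phi>' s \<partial>lborel) = \<phi> b - \<phi> a"
proof -
  let ?f = "\<lambda>s. indicator {a..b} s * \<phi>' s"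
  have "(?f has_integral (\<integral>x. ?f x \<partial>lborel)) UNIV"
    using int by (rule has_integral_integral_lborel)
  moreover
  have "(\<phi>' has_integral \<phi> b - \<phi> a) {a .. b}"
  proof (rule fundamental_theorem_of_calculus[OF ab])
    fix x assume "x \<in> {a..b}"
    then show "(\<phi> has_vector_derivative \<phi>' x) (at x within {a..b})"
      using d by (auto intro: has_vector_derivative_at_within)
  qed
  then have "(?f has_integral \<phi> b - \<phi> a) {a .. b}"
    by (rule has_integral_eq[rotated]) (simp add: indicator_def)
  then have "(?f has_integral \<phi> b - \<phi> a) UNIV"
    by (intro has_integral_on_superset[where T=UNIV and S="{a..b}"]) auto
  ultimately show ?thesis
    by (rule has_integral_unique)
qed

lemma deriv_inv_pow:
  fixes s :: real and n :: nat
  assumes "1 \<le> s" "0 < n"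
  shows "((\<lambda>s. - 1 / (real n * s ^ n)) has_vector_derivative 1 / s ^ (n + 1)) (at s)"
proof -
  have d1: "((\<lambda>s. real n * s ^ n) has_field_derivative real n * (real n * s ^ (n - 1))) (at s)"
    by (intro DERIV_cmult) (use DERIV_pow[of n s] in simp)
  have nz: "real n * s ^ n \<noteq> 0" using assms by simp
  have "((\<lambda>s. - 1 / (real n * s ^ n)) has_field_derivative
     ((0 * (real n * s ^ n) - (-1) * (real n * (real n * s ^ (n - 1)))) / ((real n * s ^ n) * (real n * s ^ n)))) (at s)"
    by (rule DERIV_divide[OF DERIV_const d1 nz])
  moreover have "((0 * (real n * s ^ n) - (-1) * (real n * (real n * s ^ (n - 1)))) / ((real n * s ^ n) * (real n * s ^ n))) = 1 / s ^ (n + 1)"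
  proof -
    obtain m where m: "n = Suc m" using assms(2) gr0_conv_Suc by blast
    have p: "s ^ n = s * s ^ (n - 1)" "s ^ (n + 1) = s * (s * s ^ (n - 1))" unfolding m by simp_all
    have nz2: "s ^ (n - 1) \<noteq> 0" "s \<noteq> 0" "real n \<noteq> 0" using assms by auto
    show ?thesis unfolding p using nz2 by (simp add: field_simps)
  qed
  ultimately show ?thesis by (simp add: has_real_derivative_iff_has_vector_derivative)
qed

lemma ibp_scaling:
  fixes f :: "real^'n \<Rightarrow> real" and Df :: "real^'n \<Rightarrow> real^'n"
  assumes diff: "\<And>y. (f has_derivative (\<lambda>u. Df y \<bullet> u)) (at y)"
    and fint: "integrable lborel f"
    and hint: "integrable lborel (\<lambda>y. y \<bullet> Df y)"
    and Dm[measurable]: "Df \<in> borel_measurable borel"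
  shows "(\<integral>y. y \<bullet> Df y \<partial>lborel) = - real CARD('n) * (\<integral>y. f y \<partial>lborel)"
proof -
  define n where "n = CARD('n)"
  have n0: "n > 0" by (simp add: n_def)
  have fc: "continuous_on UNIV f"
    using diff by (meson has_derivative_continuous continuous_at_imp_continuous_on)
  have fm[measurable]: "f \<in> borel_measurable borel"
    using fc by (rule borel_measurable_continuous_onI)
  define h where "h y = y \<bullet> Df y" for y
  have hm[measurable]: "h \<in> borel_measurable borel" unfolding h_def by measurable
  define F where "F s x = indicator {1..2::real} s * (x \<bullet> Df (s *\<^sub>R x))" for s x
  have Fm[measurable]: "(\<lambda>(s,x). F s x) \<in> borel_measurable (lborel \<Otimes>\<^sub>M (lborel :: (real^'n) measure))"
    unfolding F_def by measurable
  have Fh: "F s x = indicator {1..2::real} s * (h (s *\<^sub>R x) / s)" for s x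
    by (cases "s \<in> {1..2}") (auto simp: F_def h_def)
  have hi: "integrable lborel h" using hint by (simp add: h_def[abs_def])
  have hs_int: "integrable lborel (\<lambda>x. h (s *\<^sub>R x))" if "s > 0" for s
    using scale_integral(1)[OF that hm] hi by blast
  have hs_abs: "integrable lborel (\<lambda>x. \<bar>h (s *\<^sub>R x)\<bar>)" if "s > 0" for s
    using scale_integral(1)[OF that borel_measurable_abs[OF hm]] hi by auto
  have Fint_x: "integrable lborel (F s)" for s
  proof (cases "s \<in> {1..2}")
    case True
    then show ?thesis unfolding Fh using hs_int[of s] True by simp
  next
    case False
    then have "F s = (\<lambda>x. 0)" by (auto simp: F_def fun_eq_iff)
    then show ?thesis by simp
  qed
  have Fx_integral: "(\<integral>x. F s x \<partial>lborel) = indicator {1..2::real} s * ((\<integral>x. h x \<partial>lborel) / s ^ (n + 1))" for s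
  proof (cases "s \<in> {1..2}")
    case True
    then have "(\<integral>x. F s x \<partial>lborel) = (\<integral>x. h (s *\<^sub>R x) \<partial>lborel) / s"
      unfolding Fh by simp
    also have "\<dots> = (\<integral>x. h x \<partial>lborel) / s ^ (n + 1)"
      using True by (simp add: scale_integral(2)[OF _ hm] n_def field_simps)
    finally show ?thesis using True by simp
  qed (simp add: F_def)
  have Fx_abs: "(\<integral>x. norm (F s x) \<partial>lborel) = indicator {1..2::real} s * ((\<integral>x. \<bar>h x\<bar> \<partial>lborel) / s ^ (n + 1))" for s
  proof (cases "s \<in> {1..2}")
    case True
    then have "(\<integral>x. norm (F s x) \<partial>lborel) = (\<integral>x. \<bar>h (s *\<^sub>R x)\<bar> \<partial>lborel) / s"
      unfolding Fh by simp
    also have "\<dots> = (\<integral>x. \<bar>h x\<bar> \<partial>lborel) / s ^ (n + 1)"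
      using True by (simp add: scale_integral(2)[OF _ borel_measurable_abs[OF hm]] n_def field_simps)
    finally show ?thesis using True by simp
  qed (simp add: F_def)
  have cont_pow: "continuous_on {1..2} (\<lambda>s::real. 1 / s ^ (n + 1))"
    by (intro continuous_intros) auto
  have int_pow: "integrable lborel (\<lambda>s::real. indicator {1..2} s * (1 / s ^ (n + 1)))"
    using borel_integrable_atLeastAtMost'[OF cont_pow] by (simp add: set_integrable_def)
  have I1: "integrable lborel (\<lambda>s. \<integral>x. norm (F s x) \<partial>lborel)"
      unfolding Fx_abs using int_pow[THEN integrable_mult_right[where c="\<integral>x. \<bar>h x\<bar> \<partial>lborel"]]
      by (simp add: field_simps)
  have I2: "AE s in lborel. integrable lborel (\<lambda>x. F s x)" using Fint_x by simp
  have Fint: "integrable (lborel \<Otimes>\<^sub>M lborel) (\<lambda>(s,x). F s x)"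
    using lborel_pair.Fubini_integrable[OF Fm] I1 I2 by simp
  have I_pow: "(\<integral>s. indicator {1..2::real} s * (1 / s ^ (n + 1)) \<partial>lborel) = (1 - 1 / 2 ^ n) / n"
  proof -
    have "(\<integral>s. indicator {1..2::real} s * (1 / s ^ (n + 1)) \<partial>lborel)
        = (\<lambda>s. - 1 / (real n * s ^ n)) 2 - (\<lambda>s. - 1 / (real n * s ^ n)) 1"
    proof (rule FTC_lborel[OF _ _ int_pow])
      fix s :: real assume "1 \<le> s" "s \<le> 2"
      then show "((\<lambda>s. - 1 / (real n * s ^ n)) has_vector_derivative 1 / s ^ (n + 1)) (at s)"
        using n0 by (intro deriv_inv_pow) auto
    qed simp
    then show ?thesis using n0 by (simp add: field_simps)
  qed
  have lhs: "(\<integral>s. (\<integral>x. F s x \<partial>lborel) \<partial>lborel) = (\<integral>x. h x \<partial>lborel) * ((1 - 1 / 2 ^ n) / n)"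
  proof -
    have "(\<integral>s. (\<integral>x. F s x \<partial>lborel) \<partial>lborel) = (\<integral>s. (\<integral>x. h x \<partial>lborel) * (indicator {1..2::real} s * (1 / s ^ (n + 1))) \<partial>lborel)"
      unfolding Fx_integral by (intro Bochner_Integration.integral_cong) auto
    also have "\<dots> = (\<integral>x. h x \<partial>lborel) * ((1 - 1 / 2 ^ n) / n)"
      by (subst integral_mult_right_zero) (use I_pow in simp)
    finally show ?thesis .
  qed
  have inner1: "(\<integral>s. F s x \<partial>lborel) = f (2 *\<^sub>R x) - f (1 *\<^sub>R x)"
    if "integrable lborel (\<lambda>s. F s x)" for x
  proof -
    have "(\<integral>s. indicator {1..2} s * (x \<bullet> Df (s *\<^sub>R x)) \<partial>lborel) = f (2 *\<^sub>R x) - f (1 *\<^sub>R x)"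
    proof (rule FTC_lborel[where \<phi>="\<lambda>s. f (s *\<^sub>R x)"])
      fix s :: real
      have 1: "((\<lambda>s. s *\<^sub>R x) has_derivative (\<lambda>t. t *\<^sub>R x)) (at s)"
        by (auto intro!: derivative_eq_intros)
      have "((\<lambda>s. f (s *\<^sub>R x)) has_derivative (\<lambda>t. Df (s *\<^sub>R x) \<bullet> (t *\<^sub>R x))) (at s)"
        using has_derivative_compose[OF 1 diff] by simp
      moreover have "(\<lambda>t. Df (s *\<^sub>R x) \<bullet> (t *\<^sub>R x)) = (\<lambda>t. t *\<^sub>R (x \<bullet> Df (s *\<^sub>R x)))"
        by (auto simp: inner_commute)
      ultimately show "((\<lambda>s. f (s *\<^sub>R x)) has_vector_derivative x \<bullet> Df (s *\<^sub>R x)) (at s)"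
        by (simp add: has_vector_derivative_def)
    next
      show "integrable lborel (\<lambda>s. indicator {1..2} s * (x \<bullet> Df (s *\<^sub>R x)))"
        using that by (simp add: F_def)
    qed simp
    then show ?thesis by (simp add: F_def)
  qed
  have AEx: "AE x in lborel. integrable lborel (\<lambda>s. F s x)"
    using lborel_pair.AE_integrable_snd[OF Fint] by simp
  have rhs: "(\<integral>x. (\<integral>s. F s x \<partial>lborel) \<partial>lborel) = (\<integral>x. f (2 *\<^sub>R x) - f x \<partial>lborel)"
  proof (rule integral_cong_AE)
    show "(\<lambda>x. \<integral>s. F s x \<partial>lborel) \<in> borel_measurable lborel"
      using lborel_pair.integrable_snd[OF Fint] by (simp add: borel_measurable_integrable)
    show "(\<lambda>x. f (2 *\<^sub>R x) - f x) \<in> borel_measurable lborel" by measurable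
    show "AE x in lborel. (\<integral>s. F s x \<partial>lborel) = f (2 *\<^sub>R x) - f x"
      using AEx by eventually_elim (simp add: inner1)
  qed
  have f2: "integrable lborel (\<lambda>x. f (2 *\<^sub>R x))"
    using scale_integral(1)[of 2 f] fint by simp
  have "(\<integral>x. f (2 *\<^sub>R x) - f x \<partial>lborel) = (\<integral>x. f x \<partial>lborel) / 2 ^ n - (\<integral>x. f x \<partial>lborel)"
    using f2 fint scale_integral(2)[of 2 f] by (simp add: n_def)
  moreover have "(\<integral>s. (\<integral>x. F s x \<partial>lborel) \<partial>lborel) = (\<integral>x. (\<integral>s. F s x \<partial>lborel) \<partial>lborel)"
    using lborel_pair.Fubini_integral[OF Fint] by simp
  ultimately have eq: "(\<integral>x. h x \<partial>lborel) * ((1 - 1 / 2 ^ n) / n) = (\<integral>x. f x \<partial>lborel) / 2 ^ n - (\<integral>x. f x \<partial>lborel)"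
    using lhs rhs by simp
  have "(2::real) ^ n > 1" using n0 by simp
  then have "(1 - 1 / 2 ^ n :: real) \<noteq> 0" by (simp add: field_simps)
  define c :: real where "c = 1 - 1 / 2 ^ n"
  have c0: "c \<noteq> 0" using \<open>(1 - 1 / 2 ^ n :: real) \<noteq> 0\<close> by (simp add: c_def)
  have "(\<integral>x. f x \<partial>lborel) / 2 ^ n - (\<integral>x. f x \<partial>lborel) = - ((\<integral>x. f x \<partial>lborel) * c)"
    by (simp add: c_def algebra_simps)
  with eq have "((\<integral>x. h x \<partial>lborel) / n) * c = (- (\<integral>x. f x \<partial>lborel)) * c"
    by (simp add: c_def)
  then have "(\<integral>x. h x \<partial>lborel) / n = - (\<integral>x. f x \<partial>lborel)" using c0 mult_right_cancel by blast
  with n0 have "(\<integral>x. h x \<partial>lborel) = - n * (\<integral>x. f x \<partial>lborel)"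
    by (simp add: field_simps)
  then show ?thesis by (simp add: h_def n_def)
qed



lemma countable_isolated:
  fixes E :: "real set"
  assumes iso: "\<forall>s\<in>E. \<exists>e>0. \<forall>t\<in>E. \<bar>t - s\<bar> < e \<longrightarrow> t = s"
  shows "countable E"
proof -
  obtain e where e: "\<forall>s\<in>E. e s > 0 \<and> (\<forall>t\<in>E. \<bar>t - s\<bar> < e s \<longrightarrow> t = s)"
    using bchoice[OF iso] by blast
  have "\<forall>s\<in>E. \<exists>q1 q2. q1 \<in> \<rat> \<and> q2 \<in> \<rat> \<and> s - e s < q1 \<and> q1 < s \<and> s < q2 \<and> q2 < s + e s"
  proof
    fix s assume "s \<in> E"
    then have "s - e s < s" "s < s + e s" using e by auto
    from Rats_dense_in_real[OF \<open>s - e s < s\<close>] obtain q1 where "q1 \<in> \<rat>" "s - e s < q1" "q1 < s" by blast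
    from Rats_dense_in_real[OF \<open>s < s + e s\<close>] obtain q2 where "q2 \<in> \<rat>" "s < q2" "q2 < s + e s" by blast
    with \<open>q1 \<in> \<rat>\<close> \<open>s - e s < q1\<close> \<open>q1 < s\<close>
    show "\<exists>q1 q2. q1 \<in> \<rat> \<and> q2 \<in> \<rat> \<and> s - e s < q1 \<and> q1 < s \<and> s < q2 \<and> q2 < s + e s"
      by blast
  qed
  then obtain q1 where "\<forall>s\<in>E. \<exists>q2. q1 s \<in> \<rat> \<and> q2 \<in> \<rat> \<and> s - e s < q1 s \<and> q1 s < s \<and> s < q2 \<and> q2 < s + e s"
    by (rule bchoice[elim_format]) blast
  then obtain q2 where "\<forall>s\<in>E. q1 s \<in> \<rat> \<and> q2 s \<in> \<rat> \<and> s - e s < q1 s \<and> q1 s < s \<and> s < q2 s \<and> q2 s < s + e s"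
    by (rule bchoice[elim_format]) blast
  then have q: "\<And>s. s \<in> E \<Longrightarrow> q1 s \<in> \<rat> \<and> q2 s \<in> \<rat> \<and> s - e s < q1 s \<and> q1 s < s \<and> s < q2 s \<and> q2 s < s + e s"
    by blast
  define Q where "Q s = (q1 s, q2 s)" for s
  have inj: "inj_on Q E"
  proof (rule inj_onI)
    fix s s' assume "s \<in> E" "s' \<in> E" "Q s = Q s'"
    then have "q1 s < s'" "s' < q2 s" using q[of s'] by (auto simp: Q_def)
    then have "\<bar>s' - s\<bar> < e s" using q[OF \<open>s \<in> E\<close>] by auto
    then show "s = s'" using e \<open>s \<in> E\<close> \<open>s' \<in> E\<close> by auto
  qed
  have "Q ` E \<subseteq> \<rat> \<times> \<rat>" using q by (auto simp: Q_def)
  moreover have "countable (\<rat> \<times> (\<rat> :: real set))" by (intro countable_SIGMA countable_rat)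
  ultimately have "countable (Q ` E)" by (rule countable_subset)
  then show ?thesis using inj countable_image_inj_on by blast
qed

lemma zero_isolated:
  fixes \<phi> :: "real \<Rightarrow> real"
  assumes d: "(\<phi> has_field_derivative d) (at s)" and z: "\<phi> s = 0" and dn: "d \<noteq> 0"
  shows "\<exists>e>0. \<forall>t. t \<noteq> s \<and> \<bar>t - s\<bar> < e \<longrightarrow> \<phi> t \<noteq> 0"
proof -
  have "((\<lambda>t. (\<phi> t - \<phi> s) / (t - s)) \<longlongrightarrow> d) (at s)"
    using d has_field_derivative_iff by blast
  then have "eventually (\<lambda>t. (\<phi> t - \<phi> s) / (t - s) \<noteq> 0) (at s)"
    using dn tendsto_imp_eventually_ne by blast
  then obtain e where "e > 0" "\<And>t. t \<noteq> s \<Longrightarrow> dist t s < e \<Longrightarrow> (\<phi> t - \<phi> s) / (t - s) \<noteq> 0"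
    unfolding eventually_at by blast
  then show ?thesis using z by (intro exI[of _ e]) (auto simp: dist_real_def)
qed

lemma ray_deriv:
  fixes f :: "real^'n \<Rightarrow> real" and Df :: "real^'n \<Rightarrow> real^'n"
  assumes diff: "\<And>y. (f has_derivative (\<lambda>u. Df y \<bullet> u)) (at y)"
  shows "((\<lambda>s. f (s *\<^sub>R x)) has_field_derivative x \<bullet> Df (s *\<^sub>R x)) (at s)"
proof -
  have 1: "((\<lambda>s. s *\<^sub>R x) has_derivative (\<lambda>t. t *\<^sub>R x)) (at s)"
    by (auto intro!: derivative_eq_intros)
  have "((\<lambda>s. f (s *\<^sub>R x)) has_derivative (\<lambda>t. Df (s *\<^sub>R x) \<bullet> (t *\<^sub>R x))) (at s)"
    using has_derivative_compose[OF 1 diff] by simp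
  moreover have "(\<lambda>t. Df (s *\<^sub>R x) \<bullet> (t *\<^sub>R x)) = (*) (x \<bullet> Df (s *\<^sub>R x))"
    by (auto simp: inner_commute mult.commute)
  ultimately show ?thesis by (simp add: has_field_derivative_def)
qed

lemma Df_measurable:
  fixes f :: "real^'n \<Rightarrow> real" and Df :: "real^'n \<Rightarrow> real^'n"
  assumes diff: "\<And>y. (f has_derivative (\<lambda>u. Df y \<bullet> u)) (at y)"
  shows "Df \<in> borel_measurable borel"
proof -
  have fc: "continuous_on UNIV f"
    using diff by (meson has_derivative_continuous continuous_at_imp_continuous_on)
  have fm[measurable]: "f \<in> borel_measurable borel"
    using fc by (rule borel_measurable_continuous_onI)
  define t :: "nat \<Rightarrow> real" where "t k = inverse (real (Suc k))" for k
  have tl: "filterlim t (at 0) sequentially"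
  proof (rule filterlim_atI)
    show "filterlim t (nhds 0) sequentially" unfolding t_def by (rule LIMSEQ_inverse_real_of_nat)
    show "eventually (\<lambda>x. t x \<noteq> 0) sequentially" by (simp add: t_def)
  qed
  show ?thesis
  proof (rule borel_measurable_euclidean_space[THEN iffD2], rule ballI)
    fix b :: "real^'n" assume "b \<in> Basis"
    show "(\<lambda>y. Df y \<bullet> b) \<in> borel_measurable borel"
    proof (rule borel_measurable_LIMSEQ_real[where u="\<lambda>k y. (f (y + t k *\<^sub>R b) - f y) / t k"])
      fix y :: "real^'n"
      have "has_grad f (Df y) y" using diff by (simp add: has_grad_def)
      then have "((\<lambda>s. f (y + s *\<^sub>R b)) has_field_derivative (Df y \<bullet> b)) (at 0)"
        by (rule dir_deriv)
      from has_field_derivative_iff[THEN iffD1, OF this]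
      have "((\<lambda>s. (f (y + s *\<^sub>R b) - f y) / s) \<longlongrightarrow> Df y \<bullet> b) (at 0)" by simp
      from filterlim_compose[OF this tl]
      show "(\<lambda>k. (f (y + t k *\<^sub>R b) - f y) / t k) \<longlonglongrightarrow> Df y \<bullet> b" .
    next
      fix k show "(\<lambda>y. (f (y + t k *\<^sub>R b) - f y) / t k) \<in> borel_measurable borel" by measurable
    qed
  qed
qed

lemma nn_scale:
  fixes u :: "real^'n \<Rightarrow> ennreal" and c :: real
  assumes c: "c > 0" and u[measurable]: "u \<in> borel_measurable borel"
  shows "(\<integral>\<^sup>+x. u x \<partial>lborel) = ennreal (c ^ CARD('n)) * (\<integral>\<^sup>+x. u (c *\<^sub>R x) \<partial>lborel)"
proof -
  have L: "(lborel::(real^'n) measure) = density (distr lborel borel (\<lambda>x::real^'n. 0 + c *\<^sub>R x)) (\<lambda>_. \<bar>c\<bar> ^ DIM(real^'n))"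
    using lborel_affine[of c "0::real^'n"] c by simp
  have m: "(\<lambda>x::real^'n. 0 + c *\<^sub>R x) \<in> lborel \<rightarrow>\<^sub>M borel" by simp
  have "(\<integral>\<^sup>+x. u x \<partial>lborel) = (\<integral>\<^sup>+x. u x \<partial>density (distr lborel borel (\<lambda>x::real^'n. 0 + c *\<^sub>R x)) (\<lambda>_. ennreal (c ^ CARD('n))))"
    using L c by simp
  also have "\<dots> = (\<integral>\<^sup>+x. ennreal (c ^ CARD('n)) * u x \<partial>distr lborel borel (\<lambda>x. 0 + c *\<^sub>R x))"
    by (subst nn_integral_density) auto
  also have "\<dots> = (\<integral>\<^sup>+x. ennreal (c ^ CARD('n)) * u (0 + c *\<^sub>R x) \<partial>lborel)"
    by (subst nn_integral_distr[OF m]) auto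
  also have "\<dots> = ennreal (c ^ CARD('n)) * (\<integral>\<^sup>+x. u (c *\<^sub>R x) \<partial>lborel)"
    by (subst nn_integral_cmult) auto
  finally show ?thesis .
qed

lemma radial_null:
  fixes f :: "real^'n \<Rightarrow> real" and Df :: "real^'n \<Rightarrow> real^'n"
  assumes diff: "\<And>y. (f has_derivative (\<lambda>u. Df y \<bullet> u)) (at y)"
  shows "{y. f y = 0 \<and> y \<bullet> Df y \<noteq> 0} \<in> null_sets lborel"
proof -
  have fc: "continuous_on UNIV f"
    using diff by (meson has_derivative_continuous continuous_at_imp_continuous_on)
  have fm[measurable]: "f \<in> borel_measurable borel"
    using fc by (rule borel_measurable_continuous_onI)
  have Dm[measurable]: "Df \<in> borel_measurable borel" using Df_measurable[OF diff] .
  define Z where "Z = {y. f y = 0 \<and> y \<bullet> Df y \<noteq> 0}"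
  have Zs[measurable]: "Z \<in> sets borel" unfolding Z_def by measurable
  define G :: "real \<Rightarrow> real^'n \<Rightarrow> ennreal" where "G s x = indicator {1..2::real} s * indicator Z (s *\<^sub>R x)" for s x
  have Gm[measurable]: "(\<lambda>(s, x). G s x) \<in> borel_measurable (lborel \<Otimes>\<^sub>M (lborel :: (real^'n) measure))"
    unfolding G_def by measurable
  have cnt: "countable {s \<in> {1..2}. s *\<^sub>R x \<in> Z}" for x
  proof (rule countable_isolated, rule ballI)
    fix s assume s: "s \<in> {s \<in> {1..2}. s *\<^sub>R x \<in> Z}"
    then have s1: "s \<ge> 1" and fz: "f (s *\<^sub>R x) = 0" and nz: "(s *\<^sub>R x) \<bullet> Df (s *\<^sub>R x) \<noteq> 0"
      by (auto simp: Z_def)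
    have "x \<bullet> Df (s *\<^sub>R x) \<noteq> 0" using nz by simp
    from zero_isolated[OF ray_deriv[OF diff] fz this]
    obtain e where e: "e > 0" "\<And>t. t \<noteq> s \<and> \<bar>t - s\<bar> < e \<longrightarrow> f (t *\<^sub>R x) \<noteq> 0" by blast
    show "\<exists>e>0. \<forall>t\<in>{s \<in> {1..2}. s *\<^sub>R x \<in> Z}. \<bar>t - s\<bar> < e \<longrightarrow> t = s"
      using e by (intro exI[of _ e]) (auto simp: Z_def)
  qed
  have inner0: "(\<integral>\<^sup>+s. G s x \<partial>lborel) = 0" for x
  proof -
    have "(\<integral>\<^sup>+s. G s x \<partial>lborel) = (\<integral>\<^sup>+s. indicator {s \<in> {1..2}. s *\<^sub>R x \<in> Z} s \<partial>lborel)"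
      by (intro nn_integral_cong) (auto simp: G_def indicator_def)
    also have "\<dots> = emeasure lborel {s \<in> {1..2}. s *\<^sub>R x \<in> Z}"
      by (intro nn_integral_indicator) measurable
    also have "\<dots> = 0"
      using countable_imp_null_set_lborel[OF cnt[of x]] by auto
    finally show ?thesis .
  qed
  have "(\<integral>\<^sup>+s. (\<integral>\<^sup>+x. G s x \<partial>lborel) \<partial>lborel) = (\<integral>\<^sup>+x. (\<integral>\<^sup>+s. G s x \<partial>lborel) \<partial>lborel)"
    using lborel_pair.Fubini'[OF Gm] by simp
  also have "\<dots> = 0" by (simp add: inner0)
  finally have "(\<integral>\<^sup>+s. (\<integral>\<^sup>+x. G s x \<partial>lborel) \<partial>lborel) = 0" .
  then have "AE s in lborel. (\<integral>\<^sup>+x. G s x \<partial>lborel) = 0"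
    by (subst (asm) nn_integral_0_iff_AE) (use Gm in measurable)
  then obtain Nn where Nn: "{s \<in> space lborel. (\<integral>\<^sup>+x. G s x \<partial>lborel) \<noteq> 0} \<subseteq> Nn" "emeasure lborel Nn = 0" "Nn \<in> sets lborel"
    by (rule AE_E)
  have "\<not> {1..2::real} \<subseteq> Nn"
  proof
    assume "{1..2::real} \<subseteq> Nn"
    then have "emeasure lborel {1..2::real} \<le> emeasure lborel Nn" by (intro emeasure_mono Nn(3))
    then show False using Nn(2) by simp
  qed
  then obtain s where s: "s \<in> {1..2::real}" "s \<notin> Nn" by blast
  then have "(\<integral>\<^sup>+x. G s x \<partial>lborel) = 0" using Nn(1) by auto
  then have "(\<integral>\<^sup>+x. indicator Z (s *\<^sub>R x) \<partial>lborel) = 0" using s(1) by (simp add: G_def)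
  then have "(\<integral>\<^sup>+x. indicator Z x \<partial>lborel) = 0"
    using nn_scale[of s "indicator Z"] s(1) by simp
  then have "emeasure lborel Z = 0" by simp
  then show ?thesis using Zs unfolding Z_def by (auto simp: null_sets_def)
qed



lemma bern_strict:
  fixes r t :: real
  assumes r: "r > 0" "r \<noteq> 1" and t: "0 < t" "t < 1"
  shows "r powr t < 1 + t * (r - 1)"
proof -
  define g where "g x = 1 + t * (x - 1) - x powr t" for x :: real
  define g' where "g' x = t - t * x powr (t - 1)" for x :: real
  have d: "(g has_real_derivative g' x) (at x)" if "x > 0" for x
    unfolding g_def g'_def using that
    by (auto intro!: derivative_eq_intros simp: powr_diff)
  have g1: "g 1 = 0" by (simp add: g_def)
  show ?thesis
  proof (cases "r > 1")
    case True
    obtain z where z: "1 < z" "z < r" "g r - g 1 = (r - 1) * g' z"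
      using MVT2[OF True, of g g'] d by force
    have "z powr (t - 1) < 1" using z t by (intro powr_less_one) auto
    then have "g' z > 0" using t by (simp add: g'_def)
    then have "g r > 0" using z g1 True by simp
    then show ?thesis by (simp add: g_def)
  next
    case False
    then have rl: "r < 1" using r by simp
    obtain z where z: "r < z" "z < 1" "g 1 - g r = (1 - r) * g' z"
      using MVT2[OF rl, of g g'] d r by force
    have "1 powr (t - 1) < z powr (t - 1)" using z t r by (intro powr_less_mono2_neg) auto
    then have "z powr (t - 1) > 1" by simp
    then have "g' z < 0" using t by (simp add: g'_def)
    then have "g r > 0" using z g1 rl by (smt (verit) mult_pos_neg)
    then show ?thesis by (simp add: g_def)
  qed
qed

lemma young_eq:
  fixes p q a b :: real
  assumes pq: "p > 1" "q > 1" "1/p + 1/q = 1" and ab: "a \<ge> 0" "b \<ge> 0"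
    and eq: "a * b = a powr p / p + b powr q / q"
  shows "a powr p = b powr q"
proof (cases "a = 0 \<or> b = 0")
  case True
  then show ?thesis
  proof
    assume "a = 0"
    then have "b powr q / q = 0" using eq by simp
    then show ?thesis using \<open>a = 0\<close> pq by simp
  next
    assume "b = 0"
    then have "a powr p / p = 0" using eq by simp
    then show ?thesis using \<open>b = 0\<close> pq by simp
  qed
next
  case False
  then have a0: "a > 0" and b0: "b > 0" using ab by auto
  define X where "X = a powr p"
  define Y where "Y = b powr q"
  have X0: "X > 0" and Y0: "Y > 0" using a0 b0 by (auto simp: X_def Y_def)
  have aX: "a = X powr (1/p)" using a0 pq by (simp add: X_def powr_powr)
  have bY: "b = Y powr (1/q)" using b0 pq by (simp add: Y_def powr_powr)
  show ?thesis
  proof (rule ccontr)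
    assume "a powr p \<noteq> b powr q"
    then have "X \<noteq> Y" unfolding X_def Y_def .
    then have ne: "Y / X \<noteq> 1" using X0 by simp
    have t: "0 < 1/q" "1/q < 1" using pq by auto
    have "(Y / X) powr (1/q) < 1 + (1/q) * (Y / X - 1)"
      by (rule bern_strict) (use X0 Y0 ne t in auto)
    then have "X * (Y / X) powr (1/q) < X * (1 + (1/q) * (Y / X - 1))"
      using X0 by simp
    also have "X * (1 + (1/q) * (Y / X - 1)) = X / p + Y / q"
    proof -
      have hp: "1/p = 1 - 1/q" using pq(3) by linarith
      have "X * (1 + (1/q) * (Y / X - 1)) = X * (1 - 1/q) + Y / q"
        using X0 by (simp add: algebra_simps)
      also have "X * (1 - 1/q) = X / p" using hp by (metis times_divide_eq_right mult.right_neutral)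
      finally show ?thesis .
    qed
    also have "X * (Y / X) powr (1/q) = X powr (1/p) * Y powr (1/q)"
    proof -
      have "X * (Y / X) powr (1/q) = X powr 1 * (Y powr (1/q) / X powr (1/q))"
        using X0 Y0 by (simp add: powr_divide)
      also have "\<dots> = X powr (1 - 1/q) * Y powr (1/q)"
        using X0 by (simp add: powr_diff)
      also have "1 - 1/q = 1/p" using pq(3) by linarith
      finally show ?thesis .
    qed
    finally have "X powr (1/p) * Y powr (1/q) < X / p + Y / q" .
    then have "a * b < a powr p / p + b powr q / q"
      unfolding aX[symmetric] bY[symmetric] by (simp only: X_def Y_def)
    then show False using eq by simp
  qed
qed



lemma linear_real_repr:
  fixes D' :: "real^'n \<Rightarrow> real"
  assumes "linear D'"
  shows "D' = (\<lambda>u. (\<Sum>i\<in>Basis. D' i *\<^sub>R i) \<bullet> u)"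
proof
  fix u
  have "D' u = D' u \<bullet> 1" by simp
  also have "\<dots> = (\<Sum>i\<in>Basis. (u \<bullet> i) * (D' i \<bullet> 1))" by (rule Linear_Algebra.linear_componentwise[OF assms])
  also have "\<dots> = (\<Sum>i\<in>Basis. D' i *\<^sub>R i) \<bullet> u"
    by (simp add: inner_sum_right inner_commute[of _ u] mult.commute)
  finally show "D' u = (\<Sum>i\<in>Basis. D' i *\<^sub>R i) \<bullet> u" .
qed

locale setting =
  fixes X :: "(real^'n) set"
    and f g :: "real^'n \<Rightarrow> real"
    and grad :: "real^'n \<Rightarrow> real^'n"
    and N :: "real^'n \<Rightarrow> real"
    and \<alpha> :: real
  assumes X_meas: "X \<in> sets lebesgue"
    and f_dens: "\<forall>x\<in>X. 0 \<le> f x" "set_integrable lebesgue X f" "(\<integral>x\<in>X. f x \<partial>lebesgue) = 1"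
    and g_dens: "\<forall>x\<in>X. 0 \<le> g x" "set_integrable lebesgue X g" "(\<integral>x\<in>X. g x \<partial>lebesgue) = 1"
    and f_meas: "f \<in> borel_measurable lebesgue"
    and g_meas: "g \<in> borel_measurable lebesgue"
    and f_outside: "\<forall>x. x \<notin> X \<longrightarrow> f x = 0"
    and f_diff: "\<forall>x\<in>X. has_grad f (grad x) x"
    and f_bdry: "\<forall>x\<in>frontier X. f x = 0 \<and> f differentiable (at x)"
    and abs_cont: "AE x in lebesgue. x \<in> X \<and> g x = 0 \<longrightarrow> grad x = 0"
    and isnorm: "is_norm N"
    and alpha: "1 \<le> \<alpha>"
    and int1: "set_integrable lebesgue X (\<lambda>x. N x powr \<alpha> * g x)"
    and int2: "\<alpha> \<noteq> 1 \<Longrightarrow> set_integrable lebesgue X (\<lambda>x. dual_norm N ((1 / g x) *\<^sub>R grad x) powr (\<alpha> / (\<alpha> - 1)) * g x)"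
    and bnd2: "\<alpha> = 1 \<Longrightarrow> \<exists>c. AE x in lebesgue. x \<in> X \<and> 0 < g x \<longrightarrow> dual_norm N ((1 / g x) *\<^sub>R grad x) \<le> c"
begin

lemma ex_grad: "\<exists>v. (f has_derivative (\<lambda>u. v \<bullet> u)) (at y)"
proof -
  consider "y \<in> X" | "y \<in> frontier X" | "y \<notin> closure X" using closure_Un_frontier by blast
  then show ?thesis
  proof cases
    case 1 then show ?thesis using f_diff by (auto simp: has_grad_def)
  next
    case 2
    then obtain D' where D': "(f has_derivative D') (at y)"
      using f_bdry by (auto simp: differentiable_def)
    then have "D' = (\<lambda>u. (\<Sum>i\<in>Basis. D' i *\<^sub>R i) \<bullet> u)"
      by (intro linear_real_repr has_derivative_linear)
    with D' show ?thesis by metis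
  next
    case 3
    have "((\<lambda>_. 0::real) has_derivative (\<lambda>u. 0 \<bullet> u)) (at y)" by simp
    then have "(f has_derivative (\<lambda>u. 0 \<bullet> u)) (at y)"
    proof (rule has_derivative_transform_within_open)
      show "open (- closure X)" by (rule open_Compl[OF closed_closure])
      show "y \<in> - closure X" using 3 by simp
      fix x assume "x \<in> - closure X"
      then show "0 = f x" using f_outside closure_subset by fastforce
    qed
    then show ?thesis by blast
  qed
qed

definition Df :: "real^'n \<Rightarrow> real^'n" where "Df y = (SOME v. (f has_derivative (\<lambda>u. v \<bullet> u)) (at y))"

lemma diff: "(f has_derivative (\<lambda>u. Df y \<bullet> u)) (at y)"
  unfolding Df_def using someI_ex[OF ex_grad] .

lemma Df_grad: "y \<in> X \<Longrightarrow> Df y = grad y"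
proof -
  assume "y \<in> X"
  then have "(f has_derivative (\<lambda>u. grad y \<bullet> u)) (at y)" using f_diff by (simp add: has_grad_def)
  then have e: "(\<lambda>u. Df y \<bullet> u) = (\<lambda>u. grad y \<bullet> u)" using has_derivative_unique diff by blast
  have "(Df y - grad y) \<bullet> (Df y - grad y) = 0"
    using fun_cong[OF e, of "Df y - grad y"] by (simp add: inner_diff_left)
  then show ?thesis by simp
qed

lemma f_cont: "continuous_on UNIV f"
  using diff by (meson has_derivative_continuous continuous_at_imp_continuous_on)

lemma f_borel[measurable]: "f \<in> borel_measurable borel"
  using f_cont by (rule borel_measurable_continuous_onI)

lemma Df_borel[measurable]: "Df \<in> borel_measurable borel"
  using Df_measurable[OF diff] .


lemma Df_leb[measurable]: "Df \<in> borel_measurable lebesgue"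
  using Df_borel by (simp add: measurable_completion)

lemma N_borel[measurable]: "N \<in> borel_measurable borel"
  using contN[OF isnorm] by (rule borel_measurable_continuous_onI)

lemma dual_borel[measurable]: "dual_norm N \<in> borel_measurable borel"
  using cont_dual[OF isnorm] by (rule borel_measurable_continuous_onI)

lemma id_leb[measurable]: "(\<lambda>x::real^'n. x) \<in> borel_measurable lebesgue"
  by (rule measurable_completion) simp

lemma X_sets[measurable]: "X \<in> sets lebesgue" by (rule X_meas)
lemma g_leb[measurable]: "g \<in> borel_measurable lebesgue" by (rule g_meas)

definition "Dl x = dual_norm N ((1 / g x) *\<^sub>R Df x)"
definition "Dn x = dual_norm N ((1 / g x) *\<^sub>R grad x)"

lemma Dl_leb[measurable]: "Dl \<in> borel_measurable lebesgue"
  unfolding Dl_def by measurable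

lemma Dn_Dl: "x \<in> X \<Longrightarrow> Dn x = Dl x"
  by (simp add: Dn_def Dl_def Df_grad)

lemma f_int: "integrable lborel f" "(\<integral>x. f x \<partial>lborel) = 1"
proof -
  have e: "(\<lambda>x. indicator X x * f x) = f"
    using f_outside by (auto simp: fun_eq_iff indicator_def)
  have "integrable lebesgue f" using f_dens(2) by (simp add: set_integrable_def e)
  then show i: "integrable lborel f" using integrable_completion[of f lborel] by simp
  have "(\<integral>x. f x \<partial>lebesgue) = 1" using f_dens(3) by (simp add: set_lebesgue_integral_def e)
  then show "(\<integral>x. f x \<partial>lborel) = 1" using integral_completion[of f lborel] by simp
qed

lemma AE_notZ: "AE y in lebesgue. \<not> (f y = 0 \<and> y \<bullet> Df y \<noteq> 0)"
proof -
  have "{y. f y = 0 \<and> y \<bullet> Df y \<noteq> 0} \<in> null_sets lebesgue"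
    using radial_null[OF diff] by (simp add: null_sets_completionI)
  then show ?thesis by (rule AE_not_in[THEN AE_mp]) auto
qed

lemma AE_H: "AE y in lebesgue. indicator X y * (y \<bullet> grad y) = y \<bullet> Df y"
  using AE_notZ
proof eventually_elim
  case (elim y)
  show ?case
  proof (cases "y \<in> X")
    case True then show ?thesis by (simp add: Df_grad)
  next
    case False then show ?thesis using elim f_outside by auto
  qed
qed

lemma AE_nonzero: "AE y in lebesgue. y \<noteq> (0::real^'n)"
proof -
  have "{0::real^'n} \<in> null_sets lebesgue"
    using countable_imp_null_set_lborel[of "{0::real^'n}"] by (simp add: null_sets_completionI)
  from AE_not_in[OF this] show ?thesis by simp
qed


definition "ND x = N x * Dn x * g x"

lemma ND_meas[measurable]: "(\<lambda>x. indicator X x * ND x) \<in> borel_measurable lebesgue"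
proof -
  have "(\<lambda>x. indicator X x * ND x) = (\<lambda>x. indicator X x * (N x * Dl x * g x))"
    by (auto simp: fun_eq_iff indicator_def ND_def Dn_Dl)
  also have "\<dots> \<in> borel_measurable lebesgue" by measurable
  finally show ?thesis .
qed

lemma H_meas[measurable]: "(\<lambda>x. indicator X x * (x \<bullet> grad x)) \<in> borel_measurable lebesgue"
proof -
  have "(\<lambda>x. indicator X x * (x \<bullet> grad x)) = (\<lambda>x. indicator X x * (x \<bullet> Df x))"
    by (auto simp: fun_eq_iff indicator_def Df_grad)
  also have "\<dots> \<in> borel_measurable lebesgue" by measurable
  finally show ?thesis .
qed

lemma N_nonneg: "0 \<le> N x" using nN[OF isnorm] .
lemma Dn_nonneg: "0 \<le> Dn x" unfolding Dn_def using dual_nonneg[OF isnorm] .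

lemma ND_nonneg: "x \<in> X \<Longrightarrow> 0 \<le> ND x"
  unfolding ND_def using N_nonneg Dn_nonneg g_dens(1) by simp

lemma pw_bound:
  assumes x: "x \<in> X" and h: "g x > 0 \<or> grad x = 0"
  shows "\<bar>x \<bullet> grad x\<bar> \<le> ND x"
  using h
proof
  assume gx: "g x > 0"
  define u where "u = (1 / g x) *\<^sub>R grad x"
  have "grad x = g x *\<^sub>R u" using gx by (simp add: u_def)
  then have "\<bar>x \<bullet> grad x\<bar> = g x * \<bar>x \<bullet> u\<bar>" using gx by (simp add: abs_mult)
  also have "\<dots> \<le> g x * (N x * dual_norm N u)"
    using abs_inner_le_dual[OF isnorm, of x u] gx by (intro mult_left_mono) auto
  also have "\<dots> = ND x" by (simp add: ND_def Dn_def u_def)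
  finally show ?thesis .
next
  assume "grad x = 0"
  then show ?thesis using ND_nonneg[OF x] by simp
qed

lemma AE_pw: "AE x in lebesgue. x \<in> X \<longrightarrow> \<bar>x \<bullet> grad x\<bar> \<le> ND x"
  using abs_cont
proof eventually_elim
  case (elim x)
  show ?case
  proof
    assume x: "x \<in> X"
    then have "g x > 0 \<or> grad x = 0" using elim g_dens(1) by force
    then show "\<bar>x \<bullet> grad x\<bar> \<le> ND x" by (rule pw_bound[OF x])
  qed
qed

definition "beta = \<alpha> / (\<alpha> - 1)"

lemma beta: "\<alpha> > 1 \<Longrightarrow> beta > 1" "\<alpha> > 1 \<Longrightarrow> 1 / \<alpha> + 1 / beta = 1"
  by (auto simp: beta_def field_simps)

lemma int1': "integrable lebesgue (\<lambda>x. indicator X x * (N x powr \<alpha> * g x))"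
  using int1 by (simp add: set_integrable_def)

lemma int2': "\<alpha> > 1 \<Longrightarrow> integrable lebesgue (\<lambda>x. indicator X x * (Dn x powr beta * g x))"
  using int2 by (simp add: set_integrable_def Dn_def beta_def)

lemma ND_int: "integrable lebesgue (\<lambda>x. indicator X x * ND x)"
proof (cases "\<alpha> = 1")
  case False
  then have a1: "\<alpha> > 1" using alpha by simp
  have "integrable lebesgue (\<lambda>x. indicator X x * (N x powr \<alpha> * g x) / \<alpha> + indicator X x * (Dn x powr beta * g x) / beta)"
    using int1' int2'[OF a1] by (intro Bochner_Integration.integrable_add integrable_divide)
  then show ?thesis
  proof (rule Bochner_Integration.integrable_bound)
    show "AE x in lebesgue. norm (indicator X x * ND x) \<le> norm (indicator X x * (N x powr \<alpha> * g x) / \<alpha> + indicator X x * (Dn x powr beta * g x) / beta)"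
    proof (rule AE_I2)
      fix x
      show "norm (indicator X x * ND x) \<le> norm (indicator X x * (N x powr \<alpha> * g x) / \<alpha> + indicator X x * (Dn x powr beta * g x) / beta)"
      proof (cases "x \<in> X")
        case True
        have y: "N x * Dn x \<le> N x powr \<alpha> / \<alpha> + Dn x powr beta / beta"
          using Youngs_inequality[of \<alpha> beta "N x" "Dn x"] a1 beta[OF a1] N_nonneg Dn_nonneg by simp
        have "ND x \<le> (N x powr \<alpha> / \<alpha> + Dn x powr beta / beta) * g x"
          unfolding ND_def using mult_right_mono[OF y g_dens(1)[rule_format, OF True]] .
        moreover have "0 \<le> ND x" using ND_nonneg[OF True] .
        ultimately show ?thesis using True by (simp add: field_simps)
      qed simp
    qed
  qed simp
next
  case True
  obtain c where c: "AE x in lebesgue. x \<in> X \<and> 0 < g x \<longrightarrow> Dn x \<le> c"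
    using bnd2[OF True] by (auto simp: Dn_def)
  have i: "integrable lebesgue (\<lambda>x. \<bar>c\<bar> * (indicator X x * (N x * g x)))"
    using int1' True N_nonneg by (intro integrable_mult_right) simp
  then show ?thesis
  proof (rule Bochner_Integration.integrable_bound)
    show "AE x in lebesgue. norm (indicator X x * ND x) \<le> norm (\<bar>c\<bar> * (indicator X x * (N x * g x)))"
      using c
    proof eventually_elim
      case (elim x)
      show ?case
      proof (cases "x \<in> X")
        case True
        have g0: "0 \<le> g x" using g_dens(1) True by simp
        have "ND x \<le> \<bar>c\<bar> * (N x * g x)"
        proof (cases "g x > 0")
          case True
          then have "Dn x \<le> \<bar>c\<bar>" using elim \<open>x \<in> X\<close> by force
          have "(N x * g x) * Dn x \<le> (N x * g x) * \<bar>c\<bar>"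
            by (rule mult_left_mono) (use \<open>Dn x \<le> \<bar>c\<bar>\<close> N_nonneg g0 in auto)
          then show ?thesis unfolding ND_def by (simp add: mult_ac)
        next
          case False
          then show ?thesis using g0 by (simp add: ND_def)
        qed
        then show ?thesis using True ND_nonneg[OF True] N_nonneg g0 by simp
      qed simp
    qed
  qed simp
qed

lemma H_int: "integrable lebesgue (\<lambda>x. indicator X x * (x \<bullet> grad x))"
  using ND_int
proof (rule Bochner_Integration.integrable_bound)
  show "AE x in lebesgue. norm (indicator X x * (x \<bullet> grad x)) \<le> norm (indicator X x * ND x)"
    using AE_pw by eventually_elim (auto simp: indicator_def)
qed simp

lemma ibp_main: "(\<integral>x. indicator X x * (x \<bullet> grad x) \<partial>lebesgue) = - real CARD('n)"
proof -
  have hl: "integrable lebesgue (\<lambda>x. x \<bullet> Df x)"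
    using integrable_cong_AE[of "\<lambda>x. indicator X x * (x \<bullet> grad x)" lebesgue "\<lambda>x. x \<bullet> Df x"] H_int AE_H
    by simp
  have hb: "integrable lborel (\<lambda>x. x \<bullet> Df x)"
    using hl integrable_completion[of "\<lambda>x. x \<bullet> Df x" lborel] by simp
  have "(\<integral>x. indicator X x * (x \<bullet> grad x) \<partial>lebesgue) = (\<integral>x. x \<bullet> Df x \<partial>lebesgue)"
    using AE_H by (intro integral_cong_AE) auto
  also have "\<dots> = (\<integral>x. x \<bullet> Df x \<partial>lborel)"
    using integral_completion[of "\<lambda>x. x \<bullet> Df x" lborel] by simp
  also have "\<dots> = - real CARD('n) * (\<integral>x. f x \<partial>lborel)"
    using ibp_scaling[OF diff f_int(1) hb Df_borel] .
  finally show ?thesis using f_int(2) by simp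
qed


definition "nn = real CARD('n)"
definition "I1 = (\<integral>x. indicator X x * (N x powr \<alpha> * g x) \<partial>lebesgue)"
definition "I2 = (\<integral>x. indicator X x * (Dn x powr beta * g x) \<partial>lebesgue)"
definition "AA = I1 powr (1 / \<alpha>)"
definition "BB = conj_moment \<alpha> X g Dn"
definition "INDD = (\<integral>x. indicator X x * ND x \<partial>lebesgue)"

lemma nn_pos: "nn > 0" by (simp add: nn_def)

lemma n_le_ND: "nn \<le> INDD"
proof -
  have "nn = (\<integral>x. - (indicator X x * (x \<bullet> grad x)) \<partial>lebesgue)"
    using ibp_main by (simp add: nn_def)
  also have "\<dots> \<le> INDD" unfolding INDD_def
  proof (rule integral_mono_AE)
    show "integrable lebesgue (\<lambda>x. - (indicator X x * (x \<bullet> grad x)))" using H_int by simp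
    show "integrable lebesgue (\<lambda>x. indicator X x * ND x)" by (rule ND_int)
    show "AE x in lebesgue. - (indicator X x * (x \<bullet> grad x)) \<le> indicator X x * ND x"
      using AE_pw by eventually_elim (auto simp: indicator_def)
  qed
  finally show ?thesis .
qed

lemma INDD_pos: "INDD > 0" using n_le_ND nn_pos by simp

lemma ND_zero_imp:
  assumes "AE x in lebesgue. x \<in> X \<longrightarrow> N x = 0 \<or> Dn x = 0 \<or> g x = 0"
  shows False
proof -
  have "AE x in lebesgue. indicator X x * ND x = 0"
    using assms by eventually_elim (auto simp: ND_def indicator_def)
  then have "INDD = 0" unfolding INDD_def by (simp add: integral_eq_zero_AE)
  then show False using INDD_pos by simp
qed

lemma I1_nonneg: "0 \<le> I1"
  unfolding I1_def using g_dens(1) N_nonneg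
  by (intro integral_nonneg_AE AE_I2) (auto simp: indicator_def)

lemma I1_pos: "I1 > 0"
proof (rule ccontr)
  assume "\<not> I1 > 0"
  then have "I1 = 0" using I1_nonneg by simp
  then have "AE x in lebesgue. indicator X x * (N x powr \<alpha> * g x) = 0"
    unfolding I1_def using int1' g_dens(1) N_nonneg
    by (subst (asm) integral_nonneg_eq_0_iff_AE) (auto simp: indicator_def intro!: AE_I2)
  then have "AE x in lebesgue. x \<in> X \<longrightarrow> N x = 0 \<or> Dn x = 0 \<or> g x = 0"
    by eventually_elim (auto simp: indicator_def)
  then show False by (rule ND_zero_imp)
qed

lemma I2_pos: "\<alpha> > 1 \<Longrightarrow> I2 > 0"
proof (rule ccontr)
  assume a1: "\<alpha> > 1" and "\<not> I2 > 0"
  have "0 \<le> I2"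
    unfolding I2_def using g_dens(1)
    by (intro integral_nonneg_AE AE_I2) (auto simp: indicator_def)
  then have "I2 = 0" using \<open>\<not> I2 > 0\<close> by simp
  then have "AE x in lebesgue. indicator X x * (Dn x powr beta * g x) = 0"
    unfolding I2_def using int2'[OF a1] g_dens(1)
    by (subst (asm) integral_nonneg_eq_0_iff_AE) (auto simp: indicator_def intro!: AE_I2)
  then have "AE x in lebesgue. x \<in> X \<longrightarrow> N x = 0 \<or> Dn x = 0 \<or> g x = 0"
    by eventually_elim (auto simp: indicator_def)
  then show False by (rule ND_zero_imp)
qed

end


context setting begin

lemma alpha_pos: "\<alpha> > 0" using alpha by simp

lemma AA_pow: "AA powr \<alpha> = I1"
  using I1_pos alpha_pos by (simp add: AA_def powr_powr)

lemma AA_pos: "AA > 0" using I1_pos by (simp add: AA_def)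

lemma BB_gt1: "\<alpha> > 1 \<Longrightarrow> BB = I2 powr (1 / beta)"
  by (simp add: BB_def conj_moment_def I2_def beta_def Dn_def[symmetric] set_lebesgue_integral_def)

lemma BB_pow: "\<alpha> > 1 \<Longrightarrow> BB powr beta = I2"
  using I2_pos beta by (simp add: BB_gt1 powr_powr)

lemma BB_pos_gt1: "\<alpha> > 1 \<Longrightarrow> BB > 0"
  using I2_pos by (simp add: BB_gt1)

definition "R x = AA * BB * (N x powr \<alpha> * g x / (\<alpha> * I1) + Dn x powr beta * g x / (beta * I2))"

lemma young_pw:
  assumes a1: "\<alpha> > 1" and x: "x \<in> X"
  shows "ND x \<le> R x"
proof -
  have A0: "AA > 0" and B0: "BB > 0" using AA_pos BB_pos_gt1[OF a1] by auto
  have g0: "0 \<le> g x" using g_dens(1) x by simp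
  have "(N x / AA) * (Dn x / BB) \<le> (N x / AA) powr \<alpha> / \<alpha> + (Dn x / BB) powr beta / beta"
    using Youngs_inequality[of \<alpha> beta "N x / AA" "Dn x / BB"] a1 beta[OF a1] N_nonneg Dn_nonneg A0 B0 by simp
  also have "(N x / AA) powr \<alpha> = N x powr \<alpha> / I1"
    using N_nonneg A0 by (simp add: powr_divide AA_pow)
  also have "(Dn x / BB) powr beta = Dn x powr beta / I2"
    using Dn_nonneg B0 by (simp add: powr_divide BB_pow[OF a1])
  finally have y: "(N x / AA) * (Dn x / BB) \<le> N x powr \<alpha> / I1 / \<alpha> + Dn x powr beta / I2 / beta" .
  have "ND x = (AA * BB * g x) * ((N x / AA) * (Dn x / BB))"
    using A0 B0 by (simp add: ND_def field_simps)
  also have "\<dots> \<le> (AA * BB * g x) * (N x powr \<alpha> / I1 / \<alpha> + Dn x powr beta / I2 / beta)"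
    using y A0 B0 g0 by (intro mult_left_mono) auto
  also have "\<dots> = R x" by (simp add: R_def field_simps)
  finally show ?thesis .
qed

lemma R_int:
  assumes a1: "\<alpha> > 1"
  shows "integrable lebesgue (\<lambda>x. indicator X x * R x)" "(\<integral>x. indicator X x * R x \<partial>lebesgue) = AA * BB"
proof -
  have e: "(\<lambda>x. indicator X x * R x) = (\<lambda>x. (AA * BB / (\<alpha> * I1)) * (indicator X x * (N x powr \<alpha> * g x))
      + (AA * BB / (beta * I2)) * (indicator X x * (Dn x powr beta * g x)))"
    by (auto simp: fun_eq_iff R_def field_simps)
  show "integrable lebesgue (\<lambda>x. indicator X x * R x)"
    unfolding e using int1' int2'[OF a1] by simp
  have "(\<integral>x. indicator X x * R x \<partial>lebesgue) = (AA * BB / (\<alpha> * I1)) * I1 + (AA * BB / (beta * I2)) * I2"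
    unfolding e using int1' int2'[OF a1] by (simp add: I1_def I2_def)
  also have "\<dots> = AA * BB * (1 / \<alpha> + 1 / beta)"
    using I1_pos I2_pos[OF a1] by (simp add: field_simps)
  also have "\<dots> = AA * BB" using beta[OF a1] by simp
  finally show "(\<integral>x. indicator X x * R x \<partial>lebesgue) = AA * BB" .
qed

lemma holder_gt1:
  assumes a1: "\<alpha> > 1"
  shows "INDD \<le> AA * BB"
proof -
  have "INDD \<le> (\<integral>x. indicator X x * R x \<partial>lebesgue)" unfolding INDD_def
  proof (rule integral_mono_AE[OF ND_int R_int(1)[OF a1]])
    show "AE x in lebesgue. indicator X x * ND x \<le> indicator X x * R x"
      using young_pw[OF a1] by (auto simp: indicator_def)
  qed
  then show ?thesis using R_int(2)[OF a1] by simp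
qed


definition "S = {c. AE x in lebesgue. x \<in> X \<and> 0 < g x \<longrightarrow> Dn x \<le> c}"

lemma Ynn: "\<not> (AE x in lebesgue. \<not> (x \<in> X \<and> 0 < g x))"
proof
  assume "AE x in lebesgue. \<not> (x \<in> X \<and> 0 < g x)"
  then have "AE x in lebesgue. indicator X x * g x = 0"
    by eventually_elim (use g_dens(1) in \<open>force simp: indicator_def\<close>)
  then have "(\<integral>x. indicator X x * g x \<partial>lebesgue) = 0" by (simp add: integral_eq_zero_AE)
  then show False using g_dens(3) by (simp add: set_lebesgue_integral_def)
qed

lemma S_ge0: "c \<in> S \<Longrightarrow> 0 \<le> c"
proof (rule ccontr)
  assume "c \<in> S" "\<not> 0 \<le> c"
  then have "AE x in lebesgue. \<not> (x \<in> X \<and> 0 < g x)"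
    unfolding S_def using Dn_nonneg by (auto elim!: eventually_mono) (smt (verit) Dn_nonneg)
  then show False using Ynn by simp
qed

lemma S_ne: "\<alpha> = 1 \<Longrightarrow> S \<noteq> {}"
  using bnd2 by (auto simp: S_def Dn_def)

lemma BB1: "\<alpha> = 1 \<Longrightarrow> BB = Inf S"
  unfolding BB_def conj_moment_def ess_sup_wrt_def S_def by simp

lemma BB_ge0_1: assumes a: "\<alpha> = 1" shows "0 \<le> BB"
proof -
  have "0 \<le> Inf S" using S_ne[OF a] S_ge0 by (simp add: cInf_greatest)
  then show ?thesis using BB1[OF a] by simp
qed

lemma B_ess: assumes a: "\<alpha> = 1" shows "AE x in lebesgue. x \<in> X \<and> 0 < g x \<longrightarrow> Dn x \<le> BB"
proof -
  have h: "AE x in lebesgue. x \<in> X \<and> 0 < g x \<longrightarrow> Dn x \<le> Inf S + 1 / Suc k" for k :: nat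
  proof -
    have "Inf S < Inf S + 1 / Suc k" by simp
    then obtain c where c: "c \<in> S" "c < Inf S + 1 / Suc k" using cInf_lessD[OF S_ne[OF a]] by blast
    then show ?thesis unfolding S_def by (auto elim!: eventually_mono)
  qed
  have "AE x in lebesgue. \<forall>k::nat. x \<in> X \<and> 0 < g x \<longrightarrow> Dn x \<le> Inf S + 1 / Suc k"
    unfolding AE_all_countable using h by blast
  then show ?thesis
  proof eventually_elim
    case (elim x)
    show ?case
    proof
      assume h: "x \<in> X \<and> 0 < g x"
      show "Dn x \<le> BB"
      proof (rule ccontr)
        assume "\<not> Dn x \<le> BB"
        then have "Dn x - Inf S > 0" using BB1[OF a] by simp
        then obtain k :: nat where "1 / Suc k < Dn x - Inf S" by (meson nat_approx_posE)
        moreover have "Dn x \<le> Inf S + 1 / Suc k" using elim h by blast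
        ultimately show False by linarith
      qed
    qed
  qed
qed

lemma AA1: "\<alpha> = 1 \<Longrightarrow> AA = I1"
  unfolding AA_def using I1_nonneg by simp

lemma holder_1:
  assumes a: "\<alpha> = 1"
  shows "INDD \<le> AA * BB"
proof -
  have "INDD \<le> (\<integral>x. BB * (indicator X x * (N x powr \<alpha> * g x)) \<partial>lebesgue)" unfolding INDD_def
  proof (rule integral_mono_AE[OF ND_int])
    show "integrable lebesgue (\<lambda>x. BB * (indicator X x * (N x powr \<alpha> * g x)))"
      using int1' by simp
    show "AE x in lebesgue. indicator X x * ND x \<le> BB * (indicator X x * (N x powr \<alpha> * g x))"
      using B_ess[OF a]
    proof eventually_elim
      case (elim x)
      show ?case
      proof (cases "x \<in> X")
        case True
        have g0: "0 \<le> g x" using g_dens(1) True by simp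
        have "ND x \<le> BB * (N x * g x)"
        proof (cases "g x > 0")
          case True
          then have "Dn x \<le> BB" using elim \<open>x \<in> X\<close> by blast
          have "(N x * g x) * Dn x \<le> (N x * g x) * BB"
            by (rule mult_left_mono) (use \<open>Dn x \<le> BB\<close> N_nonneg g0 in auto)
          then show ?thesis by (simp add: ND_def mult_ac)
        next
          case False
          then show ?thesis using g0 by (simp add: ND_def)
        qed
        then show ?thesis using True a N_nonneg by simp
      qed simp
    qed
  qed
  also have "\<dots> = BB * I1" by (simp add: I1_def)
  finally show ?thesis using AA1[OF a] by (simp add: mult.commute)
qed

lemma first: "nn \<le> AA * BB"
proof (cases "\<alpha> = 1")
  case True then show ?thesis using n_le_ND holder_1 by (meson order_trans)
next
  case False then have "\<alpha> > 1" using alpha by simp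
  then show ?thesis using n_le_ND holder_gt1 by (meson order_trans)
qed

end


context setting begin

lemma powr_comb: "N x > 0 \<Longrightarrow> N x powr (\<alpha> - 1) * N x = N x powr \<alpha>"
  by (simp add: powr_diff)

lemma second:
  assumes K: "K > 0"
    and hyp: "AE x in lebesgue. x \<in> X \<longrightarrow> (\<exists>v. has_grad N v x \<and> grad x = (- K * g x * N x powr (\<alpha> - 1)) *\<^sub>R v)"
  shows "AA * BB = nn"
proof -
  have P: "AE x in lebesgue. x \<in> X \<longrightarrow> (- (x \<bullet> grad x) = K * (N x powr \<alpha> * g x) \<and> (g x > 0 \<longrightarrow> Dn x = K * N x powr (\<alpha> - 1)) \<and> N x > 0)"
    using hyp AE_nonzero
  proof eventually_elim
    case (elim x)
    show ?case
    proof
      assume x: "x \<in> X"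
      then obtain v where v: "has_grad N v x" "grad x = (- K * g x * N x powr (\<alpha> - 1)) *\<^sub>R v"
        using elim by blast
      have x0: "x \<noteq> 0" using elim by simp
      have Npos: "N x > 0" using x0 N_nonneg zN[OF isnorm] by (metis less_eq_real_def)
      note gv = grad_N[OF isnorm v(1) x0]
      have "- (x \<bullet> grad x) = K * g x * N x powr (\<alpha> - 1) * (v \<bullet> x)"
        using v(2) by (simp add: inner_commute)
      also have "\<dots> = K * (N x powr \<alpha> * g x)" using gv(1) powr_comb[OF Npos] by (simp add: mult_ac)
      finally have 1: "- (x \<bullet> grad x) = K * (N x powr \<alpha> * g x)" .
      have 2: "Dn x = K * N x powr (\<alpha> - 1)" if gx: "g x > 0"
      proof -
        have "(1 / g x) *\<^sub>R grad x = (- (K * N x powr (\<alpha> - 1))) *\<^sub>R v" using v(2) gx by simp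
        then have "Dn x = \<bar>- (K * N x powr (\<alpha> - 1))\<bar> * dual_norm N v"
          by (simp add: Dn_def dual_scale[OF isnorm] dual_neg[OF isnorm])
        then show ?thesis using gv(3) K by simp
      qed
      show "- (x \<bullet> grad x) = K * (N x powr \<alpha> * g x) \<and> (g x > 0 \<longrightarrow> Dn x = K * N x powr (\<alpha> - 1)) \<and> N x > 0"
        using 1 2 Npos by blast
    qed
  qed
  have nK: "nn = K * I1"
  proof -
    have "nn = (\<integral>x. - (indicator X x * (x \<bullet> grad x)) \<partial>lebesgue)"
      using ibp_main by (simp add: nn_def)
    also have "\<dots> = (\<integral>x. K * (indicator X x * (N x powr \<alpha> * g x)) \<partial>lebesgue)"
    proof (rule integral_cong_AE)
      show "(\<lambda>x. - (indicator X x * (x \<bullet> grad x))) \<in> borel_measurable lebesgue" using H_meas by simp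
      show "(\<lambda>x. K * (indicator X x * (N x powr \<alpha> * g x))) \<in> borel_measurable lebesgue"
        using borel_measurable_integrable[OF int1'] by simp
      show "AE x in lebesgue. - (indicator X x * (x \<bullet> grad x)) = K * (indicator X x * (N x powr \<alpha> * g x))"
        using P by eventually_elim (auto simp: indicator_def)
    qed
    also have "\<dots> = K * I1" by (simp add: I1_def)
    finally show ?thesis .
  qed
  show ?thesis
  proof (cases "\<alpha> = 1")
    case False
    then have a1: "\<alpha> > 1" using alpha by simp
    have ab: "(\<alpha> - 1) * beta = \<alpha>" using a1 by (simp add: beta_def)
    have I2K: "I2 = K powr beta * I1"
    proof -
      have "I2 = (\<integral>x. K powr beta * (indicator X x * (N x powr \<alpha> * g x)) \<partial>lebesgue)"
        unfolding I2_def
      proof (rule integral_cong_AE)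
        show "AE x in lebesgue. indicator X x * (Dn x powr beta * g x) = K powr beta * (indicator X x * (N x powr \<alpha> * g x))"
          using P
        proof eventually_elim
          case (elim x)
          show ?case
          proof (cases "x \<in> X \<and> g x > 0")
            case True
            then have "Dn x = K * N x powr (\<alpha> - 1)" "N x > 0" using elim by auto
            then have "Dn x powr beta = K powr beta * N x powr \<alpha>"
              using K by (simp add: powr_mult powr_powr ab)
            then show ?thesis using True by simp
          next
            case False
            then show ?thesis using g_dens(1) by (cases "x \<in> X") (auto simp: indicator_def)
          qed
        qed
      qed (use Dl_leb in \<open>auto intro!: borel_measurable_integrable[OF int2'[OF a1]]\<close>)
      also have "\<dots> = K powr beta * I1" by (simp add: I1_def)
      finally show ?thesis .
    qed
    have "BB = I2 powr (1 / beta)" using BB_gt1[OF a1] .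
    also have "\<dots> = K * I1 powr (1 / beta)"
      using K I1_pos beta[OF a1] by (simp add: I2K powr_mult powr_powr)
    finally have "AA * BB = I1 powr (1 / \<alpha>) * I1 powr (1 / beta) * K" by (simp add: AA_def)
    also have "\<dots> = I1 * K" using I1_pos beta[OF a1] by (simp add: powr_add[symmetric])
    finally show ?thesis using nK by simp
  next
    case True
    have "AE x in lebesgue. x \<in> X \<and> 0 < g x \<longrightarrow> Dn x \<le> K"
      using P by eventually_elim (use True in auto)
    then have KS: "K \<in> S" by (simp add: S_def)
    have Kmin: "K \<le> c" if "c \<in> S" for c
    proof (rule ccontr)
      assume "\<not> K \<le> c"
      have cS: "AE x in lebesgue. x \<in> X \<and> 0 < g x \<longrightarrow> Dn x \<le> c" using that by (simp add: S_def)
      have "AE x in lebesgue. \<not> (x \<in> X \<and> 0 < g x)"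
        using P cS
      proof (eventually_elim)
        case (elim x) then show ?case using True \<open>\<not> K \<le> c\<close> by force
      qed
      then show False using Ynn by simp
    qed
    have "BB = K" using BB1[OF True] cInf_eq_minimum[OF KS Kmin] by simp
    then show ?thesis using AA1[OF True] nK by simp
  qed
qed

end


context setting begin

lemma final_step:
  assumes sc: "strictly_convex_norm (dual_norm N)" and K: "K > 0"
    and E1: "AE x in lebesgue. x \<in> X \<longrightarrow> ND x = - (x \<bullet> grad x)"
    and Q: "AE x in lebesgue. x \<in> X \<and> 0 < g x \<and> x \<noteq> 0 \<longrightarrow> Dn x = K * N x powr (\<alpha> - 1)"
  shows "AE x in lebesgue. x \<in> X \<longrightarrow> (\<exists>v. has_grad N v x \<and> grad x = (- K * g x * N x powr (\<alpha> - 1)) *\<^sub>R v)"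
  using E1 Q abs_cont AE_nonzero
proof eventually_elim
  case (elim x)
  show ?case
  proof
    assume x: "x \<in> X"
    have x0: "x \<noteq> 0" using elim by simp
    have Npos: "N x > 0" using x0 N_nonneg zN[OF isnorm] by (metis less_eq_real_def)
    have g0: "0 \<le> g x" using g_dens(1) x by simp
    show "\<exists>v. has_grad N v x \<and> grad x = (- K * g x * N x powr (\<alpha> - 1)) *\<^sub>R v"
    proof (cases "g x = 0")
      case True
      then have gr: "grad x = 0" using elim x by simp
      obtain z where z: "z \<bullet> x = N x" "\<forall>u. z \<bullet> u \<le> N u" using norming[OF isnorm] by blast
      have "has_grad N z x" by (rule smooth_from_sc[OF isnorm sc x0 z])
      then show ?thesis using gr True by auto
    next
      case False
      then have gp: "g x > 0" using g0 by simp
      define u where "u = (1 / g x) *\<^sub>R grad x"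
      have Du: "Dn x = dual_norm N u" by (simp add: Dn_def u_def)
      have DK: "Dn x = K * N x powr (\<alpha> - 1)" using elim x gp x0 by blast
      have Dpos: "Dn x > 0" using DK K Npos by simp
      have gu: "grad x = g x *\<^sub>R u" using gp by (simp add: u_def)
      have "g x * (N x * Dn x) = - (g x * (x \<bullet> u))"
        using elim x gu by (simp add: ND_def mult_ac)
      then have "g x * (N x * Dn x) = g x * (- (x \<bullet> u))" by simp
      then have xu: "x \<bullet> u = - (N x * Dn x)" using gp by (metis mult_left_cancel less_irrefl minus_equation_iff)
      define w where "w = (- 1 / Dn x) *\<^sub>R u"
      have wx: "w \<bullet> x = N x" using Dpos xu by (simp add: w_def inner_commute)
      have "dual_norm N w = \<bar>- 1 / Dn x\<bar> * dual_norm N u" unfolding w_def by (rule dual_scale[OF isnorm])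
      also have "\<dots> = 1" using Dpos Du by simp
      finally have "dual_norm N w \<le> 1" by simp
      then have wu: "\<forall>z. w \<bullet> z \<le> N z" using dual_le1_iff[OF isnorm] by blast
      have hg: "has_grad N w x" by (rule smooth_from_sc[OF isnorm sc x0 wx wu])
      have "u = (- Dn x) *\<^sub>R w" using Dpos by (simp add: w_def)
      then have "grad x = (- K * g x * N x powr (\<alpha> - 1)) *\<^sub>R w" using gu DK by (simp add: mult_ac)
      then show ?thesis using hg by blast
    qed
  qed
qed


lemma E1_of_eq:
  assumes eq: "AA * BB = nn"
  shows "INDD = nn" "AE x in lebesgue. x \<in> X \<longrightarrow> ND x = - (x \<bullet> grad x)"
proof -
  have le: "INDD \<le> AA * BB"
  proof (cases "\<alpha> = 1")
    case True then show ?thesis using holder_1 by blast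
  next
    case False then show ?thesis using holder_gt1 alpha by simp
  qed
  show I: "INDD = nn" using n_le_ND le eq by simp
  have int: "integrable lebesgue (\<lambda>x. indicator X x * ND x + indicator X x * (x \<bullet> grad x))"
    using ND_int H_int by simp
  have "(\<integral>x. indicator X x * ND x + indicator X x * (x \<bullet> grad x) \<partial>lebesgue) = INDD + (- nn)"
    using ND_int H_int ibp_main by (simp add: INDD_def nn_def)
  then have "(\<integral>x. indicator X x * ND x + indicator X x * (x \<bullet> grad x) \<partial>lebesgue) = 0" using I by simp
  moreover have "AE x in lebesgue. 0 \<le> indicator X x * ND x + indicator X x * (x \<bullet> grad x)"
    using AE_pw by eventually_elim (auto simp: indicator_def)
  ultimately have "AE x in lebesgue. indicator X x * ND x + indicator X x * (x \<bullet> grad x) = 0"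
    using integral_nonneg_eq_0_iff_AE[OF int] by simp
  then show "AE x in lebesgue. x \<in> X \<longrightarrow> ND x = - (x \<bullet> grad x)"
    by eventually_elim (auto simp: indicator_def)
qed

lemma Q_gt1:
  assumes a1: "\<alpha> > 1" and eq: "AA * BB = nn"
  shows "\<exists>K>0. AE x in lebesgue. x \<in> X \<and> 0 < g x \<and> x \<noteq> 0 \<longrightarrow> Dn x = K * N x powr (\<alpha> - 1)"
proof -
  have A0: "AA > 0" and B0: "BB > 0" using AA_pos BB_pos_gt1[OF a1] by auto
  have I: "INDD = nn" using E1_of_eq[OF eq] by simp
  have int: "integrable lebesgue (\<lambda>x. indicator X x * R x - indicator X x * ND x)"
    using R_int(1)[OF a1] ND_int by simp
  have "(\<integral>x. indicator X x * R x - indicator X x * ND x \<partial>lebesgue) = AA * BB - INDD"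
    using R_int[OF a1] ND_int by (simp add: INDD_def)
  then have "(\<integral>x. indicator X x * R x - indicator X x * ND x \<partial>lebesgue) = 0" using I eq by simp
  moreover have "AE x in lebesgue. 0 \<le> indicator X x * R x - indicator X x * ND x"
    using young_pw[OF a1] by (auto simp: indicator_def)
  ultimately have "AE x in lebesgue. indicator X x * R x - indicator X x * ND x = 0"
    using integral_nonneg_eq_0_iff_AE[OF int] by simp
  then have E2: "AE x in lebesgue. x \<in> X \<longrightarrow> ND x = R x"
    by eventually_elim (auto simp: indicator_def)
  define K where "K = BB / AA powr (\<alpha> - 1)"
  have K0: "K > 0" using A0 B0 by (simp add: K_def)
  have ab: "\<alpha> / beta = \<alpha> - 1" using a1 by (simp add: beta_def)
  have "AE x in lebesgue. x \<in> X \<and> 0 < g x \<and> x \<noteq> 0 \<longrightarrow> Dn x = K * N x powr (\<alpha> - 1)"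
    using E2
  proof eventually_elim
    case (elim x)
    show ?case
    proof
      assume h: "x \<in> X \<and> 0 < g x \<and> x \<noteq> 0"
      have gp: "g x > 0" using h by simp
      have "ND x = R x" using elim h by simp
      then have "(AA * BB * g x) * ((N x / AA) * (Dn x / BB)) = (AA * BB * g x) * ((N x / AA) powr \<alpha> / \<alpha> + (Dn x / BB) powr beta / beta)"
        using A0 B0 N_nonneg Dn_nonneg
        by (simp add: ND_def R_def powr_divide AA_pow BB_pow[OF a1] field_simps)
      then have yeq: "(N x / AA) * (Dn x / BB) = (N x / AA) powr \<alpha> / \<alpha> + (Dn x / BB) powr beta / beta"
        using A0 B0 gp by simp
      have pe: "(N x / AA) powr \<alpha> = (Dn x / BB) powr beta"
        by (rule young_eq[OF a1 beta(1)[OF a1] beta(2)[OF a1] _ _ yeq]) (use A0 B0 N_nonneg Dn_nonneg in auto)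
      have "Dn x / BB = ((Dn x / BB) powr beta) powr (1 / beta)"
        using B0 Dn_nonneg beta(1)[OF a1] by (simp add: powr_powr)
      also have "\<dots> = ((N x / AA) powr \<alpha>) powr (1 / beta)" using pe by simp
      also have "\<dots> = (N x / AA) powr (\<alpha> - 1)" using ab by (simp add: powr_powr)
      also have "\<dots> = N x powr (\<alpha> - 1) / AA powr (\<alpha> - 1)" using A0 N_nonneg by (simp add: powr_divide)
      finally show "Dn x = K * N x powr (\<alpha> - 1)" using B0 by (simp add: K_def field_simps)
    qed
  qed
  then show ?thesis using K0 by blast
qed

lemma Q_1:
  assumes a: "\<alpha> = 1" and eq: "AA * BB = nn"
  shows "\<exists>K>0. AE x in lebesgue. x \<in> X \<and> 0 < g x \<and> x \<noteq> 0 \<longrightarrow> Dn x = K * N x powr (\<alpha> - 1)"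
proof -
  have I: "INDD = nn" using E1_of_eq[OF eq] by simp
  have int: "integrable lebesgue (\<lambda>x. BB * (indicator X x * (N x powr \<alpha> * g x)) - indicator X x * ND x)"
    using int1' ND_int by simp
  have "(\<integral>x. BB * (indicator X x * (N x powr \<alpha> * g x)) - indicator X x * ND x \<partial>lebesgue) = BB * I1 - INDD"
    using int1' ND_int by (simp add: INDD_def I1_def)
  also have "\<dots> = 0" using I eq AA1[OF a] by (simp add: mult.commute)
  finally have z: "(\<integral>x. BB * (indicator X x * (N x powr \<alpha> * g x)) - indicator X x * ND x \<partial>lebesgue) = 0" .
  have pw: "AE x in lebesgue. x \<in> X \<longrightarrow> ND x \<le> BB * (N x * g x)"
    using B_ess[OF a]
  proof eventually_elim
    case (elim x)
    show ?case
    proof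
      assume "x \<in> X"
      have g0: "0 \<le> g x" using g_dens(1) \<open>x \<in> X\<close> by simp
      show "ND x \<le> BB * (N x * g x)"
      proof (cases "g x > 0")
        case True
        then have "Dn x \<le> BB" using elim \<open>x \<in> X\<close> by blast
        have "(N x * g x) * Dn x \<le> (N x * g x) * BB"
          by (rule mult_left_mono) (use \<open>Dn x \<le> BB\<close> N_nonneg g0 in auto)
        then show ?thesis by (simp add: ND_def mult_ac)
      next
        case False
        then show ?thesis using g0 by (simp add: ND_def)
      qed
    qed
  qed
  have "AE x in lebesgue. 0 \<le> BB * (indicator X x * (N x powr \<alpha> * g x)) - indicator X x * ND x"
    using pw by eventually_elim (use a N_nonneg in \<open>auto simp: indicator_def\<close>)
  then have "AE x in lebesgue. BB * (indicator X x * (N x powr \<alpha> * g x)) - indicator X x * ND x = 0"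
    using integral_nonneg_eq_0_iff_AE[OF int] z by simp
  then have E3: "AE x in lebesgue. x \<in> X \<longrightarrow> ND x = BB * (N x * g x)"
    by eventually_elim (use a N_nonneg in \<open>auto simp: indicator_def\<close>)
  have B0: "BB > 0"
  proof -
    have "AA * BB > 0" using eq nn_pos by simp
    then show ?thesis using BB_ge0_1[OF a] AA_pos by (simp add: zero_less_mult_iff)
  qed
  have "AE x in lebesgue. x \<in> X \<and> 0 < g x \<and> x \<noteq> 0 \<longrightarrow> Dn x = BB * N x powr (\<alpha> - 1)"
    using E3
  proof eventually_elim
    case (elim x)
    show ?case
    proof
      assume h: "x \<in> X \<and> 0 < g x \<and> x \<noteq> 0"
      have Npos: "N x > 0" using h N_nonneg zN[OF isnorm] by (metis less_eq_real_def)
      have "(N x * g x) * Dn x = (N x * g x) * BB" using elim h by (simp add: ND_def mult_ac)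
      then have "Dn x = BB" using Npos h by simp
      then show "Dn x = BB * N x powr (\<alpha> - 1)" using a Npos by simp
    qed
  qed
  then show ?thesis using B0 by blast
qed

lemma third:
  assumes sc: "strictly_convex_norm (dual_norm N)" and eq: "AA * BB = nn"
  shows "\<exists>K>0. AE x in lebesgue. x \<in> X \<longrightarrow> (\<exists>v. has_grad N v x \<and> grad x = (- K * g x * N x powr (\<alpha> - 1)) *\<^sub>R v)"
proof -
  obtain K where K: "K > 0" "AE x in lebesgue. x \<in> X \<and> 0 < g x \<and> x \<noteq> 0 \<longrightarrow> Dn x = K * N x powr (\<alpha> - 1)"
    using Q_1[OF _ eq] Q_gt1[OF _ eq] alpha by (cases "\<alpha> = 1") auto
  show ?thesis using final_step[OF sc K(1) E1_of_eq(2)[OF eq] K(2)] K(1) by blast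
qed

end


theorem corollary2:
  fixes X :: "(real^'n) set"
    and f g :: "real^'n \<Rightarrow> real"
    and grad :: "real^'n \<Rightarrow> real^'n"
    and N :: "real^'n \<Rightarrow> real"
    and \<alpha> :: real
  defines "D \<equiv> (\<lambda>x. dual_norm N ((1 / g x) *\<^sub>R grad x))"
  defines "A \<equiv> (\<integral>x\<in>X. N x powr \<alpha> * g x \<partial>lebesgue) powr (1 / \<alpha>)"
  defines "B \<equiv> conj_moment \<alpha> X g D"
  assumes X_meas: "X \<in> sets lebesgue"
    and f_dens: "\<forall>x\<in>X. 0 \<le> f x" "set_integrable lebesgue X f" "(\<integral>x\<in>X. f x \<partial>lebesgue) = 1"
    and g_dens: "\<forall>x\<in>X. 0 \<le> g x" "set_integrable lebesgue X g" "(\<integral>x\<in>X. g x \<partial>lebesgue) = 1"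
    and f_meas: "f \<in> borel_measurable lebesgue"
    and g_meas: "g \<in> borel_measurable lebesgue"
    and f_outside: "\<forall>x. x \<notin> X \<longrightarrow> f x = 0"
    and f_diff: "\<forall>x\<in>X. has_grad f (grad x) x"
    and f_bdry: "\<forall>x\<in>frontier X. f x = 0 \<and> f differentiable (at x)"
    and abs_cont: "AE x in lebesgue. x \<in> X \<and> g x = 0 \<longrightarrow> grad x = 0"
    and norm: "is_norm N"
    and alpha: "1 \<le> \<alpha>"
    and int1: "set_integrable lebesgue X (\<lambda>x. N x powr \<alpha> * g x)"
    and int2: "\<alpha> \<noteq> 1 \<Longrightarrow> set_integrable lebesgue X (\<lambda>x. D x powr (\<alpha> / (\<alpha> - 1)) * g x)"
    and bnd2: "\<alpha> = 1 \<Longrightarrow> \<exists>c. AE x in lebesgue. x \<in> X \<and> 0 < g x \<longrightarrow> D x \<le> c"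
  shows "A * B \<ge> real CARD('n)
     \<and> ((\<exists>K>0. AE x in lebesgue. x \<in> X \<longrightarrow>
            (\<exists>v. has_grad N v x \<and> grad x = (- K * g x * N x powr (\<alpha> - 1)) *\<^sub>R v))
         \<longrightarrow> A * B = real CARD('n))
     \<and> (strictly_convex_norm (dual_norm N) \<and> A * B = real CARD('n) \<longrightarrow>
         (\<exists>K>0. AE x in lebesgue. x \<in> X \<longrightarrow>
            (\<exists>v. has_grad N v x \<and> grad x = (- K * g x * N x powr (\<alpha> - 1)) *\<^sub>R v)))"
proof -
  interpret S: setting X f g grad N \<alpha>
  proof (unfold_locales)
    show "\<alpha> \<noteq> 1 \<Longrightarrow> set_integrable lebesgue X (\<lambda>x. dual_norm N ((1 / g x) *\<^sub>R grad x) powr (\<alpha> / (\<alpha> - 1)) * g x)"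
      using int2 by (simp add: D_def)
    show "\<alpha> = 1 \<Longrightarrow> \<exists>c. AE x in lebesgue. x \<in> X \<and> 0 < g x \<longrightarrow> dual_norm N ((1 / g x) *\<^sub>R grad x) \<le> c"
      using bnd2 by (simp add: D_def)
  qed (use X_meas f_dens g_dens f_meas g_meas f_outside f_diff f_bdry abs_cont norm alpha int1 in auto)
  have D: "D = S.Dn" by (simp add: D_def S.Dn_def fun_eq_iff)
  have A: "A = S.AA" unfolding A_def S.AA_def S.I1_def set_lebesgue_integral_def by simp
  have B: "B = S.BB" unfolding B_def S.BB_def D ..
  have n: "real CARD('n) = S.nn" by (simp add: S.nn_def)
  show ?thesis
    unfolding A B n using S.first S.second S.third by blast
qed

end
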